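(* The boundary set $\partial\Xi=\{\xi\in\Xi:\ \kappa(\xi)>1\}$ is infinite; that is, there are infinitely many $\xi\in\Xi$ which are the fractional part of at least two distinct periodic points of the scaling map $\gamma$.
   Context: Let $\lambda$ be the real root of $x^3+x^2+x-1$, $\omega=\lambda^3=1-\lambda-\lambda^2$. Every $x\in\mathbb{Q}(\lambda)$ is uniquely $x=r_0+r_1\lambda+r_2\lambda^2$ with $r_i\in\mathbb{Q}$; set $\Xi=\{\xi_0+\xi_1\lambda+\xi_2\lambda^2:\ \xi_i\in\mathbb{Q}\cap[0,1)\}$ and $\Pi_f(x)=\{r_0\}+\{r_1\}\lambda+\{r_2\}\lambda^2\in\Xi$ (fractional parts of coordinates). Scaling map: put $N=7$ and the data (for $j=0,\dots,6$): $\tau_0=\lambda+\lambda^2$, $\tau_1=-1+3\lambda$, $\tau_2=\lambda-\lambda^2$, $\tau_3=-1+2\lambda+\lambda^2$, $\tau_4=1-\lambda-\lambda^2$, $\tau_5=\lambda-\lambda^2$, $\tau_6=-\lambda$; $(\nu_0,\dots,\nu_6)=(4,13,12,8,8,12,4)$; path function $p(j,t)$, $0\le t<\nu_j$, is the $(t+1)$-th entry of the list: $j=0$: $(0,6,3,6)$; $j=1$: $(0,6,3,6,1,6,2,5,6,1,6,3,6)$; $j=2$: $(0,6,3,6,1,6,2,5,6,2,4,6)$; $j=3$: $(0,6,3,6,1,6,3,6)$; $j=4$: $(0,6,4,5,6,2,4,6)$; $j=5$: $(0,6,4,5,6,2,5,6,1,6,3,6)$; $j=6$: $(0,6,4,6)$.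 Let $\mathcal{V}$ be the set of sequences $\sigma=((j_1,t_1),(j_2,t_2),\dots)$ with $0\le j_k\le 6$, $0\le t_k<\nu_{j_k}$, $j_k=p(j_{k+1},t_{k+1})$ for all $k\ge1$, and which do not end in any of the tails $(1,9)^\infty,(2,6)^\infty,(3,2)^\infty,(4,6)^\infty,(5,3)^\infty,(6,1)^\infty$. Put $d_i=\sum_{t=0}^{t_i-1}\tau_{p(j_i,t)}$ and $x(\sigma)=\sum_{i\ge1}d_i\omega^{i-1}$; the map $\sigma\mapsto x(\sigma)$ is a bijection $\mathcal{V}\to[0,1)$. The scaling map $\gamma:[0,1)\to[0,1)$ is $\gamma(x)=(x-d_1)\omega^{-1}$, where $d_1$ is the first digit of the code of $x$; it is conjugate to the left shift on $\mathcal{V}$. A periodic point of $\gamma$ is an $x$ with $\gamma^n(x)=x$ for some $n\ge1$. For $\xi\in\Xi$, the multiplicity $\kappa(\xi)$ is the number of periodic points $x$ of $\gamma$ with $\Pi_f(x)=\xi$. *)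

theory Defs
  imports Complex_Main "HOL-Library.Extended_Nat"
begin

text \<open>lambda: the real root of x^3 + x^2 + x - 1 (unique, since the polynomial is strictly increasing).\<close>
definition lam :: real where
  "lam = (THE x::real. x ^ 3 + x ^ 2 + x - 1 = 0)"

definition omega :: real where
  "omega = lam ^ 3"

definition in_Qlam :: "real \<Rightarrow> bool" where
  "in_Qlam x \<longleftrightarrow> (\<exists>r0 r1 r2 :: rat. x = of_rat r0 + of_rat r1 * lam + of_rat r2 * lam ^ 2)"

definition coords :: "real \<Rightarrow> rat \<times> rat \<times> rat" where
  "coords x = (THE (r0, r1, r2). x = of_rat r0 + of_rat r1 * lam + of_rat r2 * lam ^ 2)"

definition Pi_f :: "real \<Rightarrow> real" where
  "Pi_f x = (case coords x of (r0, r1, r2) \<Rightarrow>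
      of_rat (frac r0) + of_rat (frac r1) * lam + of_rat (frac r2) * lam ^ 2)"

definition Xi :: "real set" where
  "Xi = {of_rat a0 + of_rat a1 * lam + of_rat a2 * lam ^ 2 | a0 a1 a2 :: rat.
          0 \<le> a0 \<and> a0 < 1 \<and> 0 \<le> a1 \<and> a1 < 1 \<and> 0 \<le> a2 \<and> a2 < 1}"

definition tau_list :: "real list" where
  "tau_list = [lam + lam ^ 2, -1 + 3 * lam, lam - lam ^ 2, -1 + 2 * lam + lam ^ 2,
               1 - lam - lam ^ 2, lam - lam ^ 2, - lam]"

definition tau :: "nat \<Rightarrow> real" where
  "tau j = tau_list ! j"

definition nu :: "nat \<Rightarrow> nat" where
  "nu j = [4, 13, 12, 8, 8, 12, 4] ! j"

definition path_list :: "nat list list" where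
  "path_list =
    [[0,6,3,6],
     [0,6,3,6,1,6,2,5,6,1,6,3,6],
     [0,6,3,6,1,6,2,5,6,2,4,6],
     [0,6,3,6,1,6,3,6],
     [0,6,4,5,6,2,4,6],
     [0,6,4,5,6,2,5,6,1,6,3,6],
     [0,6,4,6]]"

definition p :: "nat \<Rightarrow> nat \<Rightarrow> nat" where
  "p j t = path_list ! j ! t"

text \<open>Sequences sigma = ((j_1,t_1),(j_2,t_2),...) are encoded as functions on nat,
  with sigma 0 = (j_1,t_1).\<close>
definition excluded_tails :: "(nat \<times> nat) set" where
  "excluded_tails = {(1,9), (2,6), (3,2), (4,6), (5,3), (6,1)}"

definition V :: "(nat \<Rightarrow> nat \<times> nat) set" where
  "V = {\<sigma>. (\<forall>k. fst (\<sigma> k) \<le> 6 \<and> snd (\<sigma> k) < nu (fst (\<sigma> k)))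
          \<and> (\<forall>k. fst (\<sigma> k) = p (fst (\<sigma> (Suc k))) (snd (\<sigma> (Suc k))))
          \<and> \<not> (\<exists>a\<in>excluded_tails. \<exists>m. \<forall>k\<ge>m. \<sigma> k = a)}"

definition digit :: "nat \<times> nat \<Rightarrow> real" where
  "digit jt = (\<Sum>t<snd jt. tau (p (fst jt) t))"

definition xval :: "(nat \<Rightarrow> nat \<times> nat) \<Rightarrow> real" where
  "xval \<sigma> = (\<Sum>i. digit (\<sigma> i) * omega ^ i)"

definition code :: "real \<Rightarrow> (nat \<Rightarrow> nat \<times> nat)" where
  "code x = (THE \<sigma>. \<sigma> \<in> V \<and> xval \<sigma> = x)"

definition gamma :: "real \<Rightarrow> real" where
  "gamma x = (x - digit (code x 0)) / omega"

definition periodic_point :: "real \<Rightarrow> bool" where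
  "periodic_point x \<longleftrightarrow> x \<in> {0..<1} \<and> (\<exists>n\<ge>1. (gamma ^^ n) x = x)"

definition kappa :: "real \<Rightarrow> enat" where
  "kappa \<xi> = (let S = {x. periodic_point x \<and> in_Qlam x \<and> Pi_f x = \<xi>}
              in if finite S then enat (card S) else \<infinity>)"

definition boundary_Xi :: "real set" where
  "boundary_Xi = {\<xi> \<in> Xi. kappa \<xi> > 1}"

end

theory Submission
  imports Defs "HOL-Number_Theory.Cong"
begin


definition fl :: "real \<Rightarrow> real" where "fl x = x^3 + x^2 + x - 1"

lemma fl_mono_aux: "x < y \<Longrightarrow> fl x < fl y"
proof -
  assume xy: "x < y"
  have q: "x^2 + x*y + y^2 + x + y + 1 > 0"
  proof -
    have "2*(x^2 + x*y + y^2 + x + y + 1) = (x+y)^2 + ((x+1)^2 + (y+1)^2)"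
      by (simp add: power2_eq_square algebra_simps)
    moreover have "(x+1)^2 + (y+1)^2 > 0"
      using xy by (smt (verit) power2_less_0 zero_less_power2)
    moreover have "(x+y)^2 \<ge> 0" by simp
    ultimately show ?thesis by (smt (verit))
  qed
  have "fl y - fl x = (y - x) * (x^2 + x*y + y^2 + x + y + 1)"
    by (simp add: fl_def power2_eq_square power3_eq_cube algebra_simps)
  also have "\<dots> > 0" using xy q by simp
  finally show ?thesis by simp
qed

lemma fl_mono_le: "x \<le> y \<Longrightarrow> fl x \<le> fl y"
  using fl_mono_aux[of x y] by (cases "x = y") auto

lemma lam_ex: "\<exists>!x::real. x ^ 3 + x ^ 2 + x - 1 = 0"
proof -
  have "\<exists>x\<ge>0. x \<le> 1 \<and> fl x = 0"
    by (rule IVT') (auto simp: fl_def intro!: continuous_intros)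
  then obtain x where "fl x = 0" by blast
  moreover have "fl y = 0 \<Longrightarrow> y = x" for y
    using fl_mono_aux[of x y] fl_mono_aux[of y x] \<open>fl x = 0\<close> by (cases "x < y"; cases "y < x") auto
  ultimately show ?thesis unfolding fl_def by blast
qed

lemma lam_root: "lam ^ 3 + lam ^ 2 + lam - 1 = 0"
  unfolding lam_def by (rule theI') (rule lam_ex)

lemma lam3: "lam ^ 3 = 1 - lam - lam^2" using lam_root by simp

lemma lam_lo: "0.5436890126 < lam"
proof (rule ccontr)
  assume "\<not> 0.5436890126 < lam"
  hence "fl lam \<le> fl 0.5436890126" using fl_mono_le[of lam "0.5436890126"] by auto
  moreover have "fl lam = 0" using lam_root by (simp add: fl_def)
  ultimately show False by (simp add: fl_def power3_eq_cube power2_eq_square)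
qed

lemma lam_hi: "lam < 0.5436890127"
proof (rule ccontr)
  assume "\<not> lam < 0.5436890127"
  hence "fl 0.5436890127 \<le> fl lam" using fl_mono_le[of "0.5436890127" lam] by auto
  moreover have "fl lam = 0" using lam_root by (simp add: fl_def)
  ultimately show False by (simp add: fl_def power3_eq_cube power2_eq_square)
qed

lemma lam2_lo: "0.5436890126^2 < lam^2"
  using lam_lo by (intro power_strict_mono) auto
lemma lam2_hi: "lam^2 < 0.5436890127^2"
  using lam_hi lam_lo by (intro power_strict_mono) auto



definition E :: "real \<Rightarrow> real \<Rightarrow> real \<Rightarrow> real" where
  "E a b c = a + b*lam + c*lam^2"

lemma lam4: "lam^4 = 2*lam - 1"
  using lam3 by algebra

lemma E_mult: "E a b c * E d e f = E (a*d + b*f + c*e - c*f) (a*e + b*d - b*f - c*e + 2*c*f) (a*f + b*e + c*d - b*f - c*e)"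
proof -
  have "E a b c * E d e f = a*d + (a*e+b*d)*lam + (a*f+b*e+c*d)*lam^2 + (b*f+c*e)*lam^3 + c*f*lam^4"
    unfolding E_def by algebra
  also have "\<dots> = E (a*d + b*f + c*e - c*f) (a*e + b*d - b*f - c*e + 2*c*f) (a*f + b*e + c*d - b*f - c*e)"
    unfolding lam3 lam4 E_def by algebra
  finally show ?thesis .
qed

lemma E_add: "E a b c + E d e f = E (a+d) (b+e) (c+f)" unfolding E_def by algebra
lemma E_diff: "E a b c - E d e f = E (a-d) (b-e) (c-f)" unfolding E_def by algebra
lemma E_scale: "x * E a b c = E (x*a) (x*b) (x*c)" unfolding E_def by algebra
lemma E_const: "E x 0 0 = x" unfolding E_def by simp

definition Nf :: "'a::comm_ring_1 \<Rightarrow> 'a \<Rightarrow> 'a \<Rightarrow> 'a" where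
  "Nf a b c = a*((a-c)*(a-b) - (2*c-b)*(b-c)) + c*(-(b*(a-b) - (2*c-b)*c)) + (b-c)*(b*(b-c) - (a-c)*c)"

lemma E_norm: "E a b c * E ((a-c)*(a-b) - (2*c-b)*(b-c)) (-(b*(a-b) - (2*c-b)*c)) (b*(b-c) - (a-c)*c) = Nf a b c"
proof -
  have "E a b c * E ((a-c)*(a-b) - (2*c-b)*(b-c)) (-(b*(a-b) - (2*c-b)*c)) (b*(b-c) - (a-c)*c) = E (Nf a b c) 0 0"
    unfolding E_mult Nf_def by (rule arg_cong3[where f=E]) algebra+
  thus ?thesis by (simp add: E_const)
qed

lemma Nf_mod3: "Nf (a::int) b c mod 3 = Nf (a mod 3) (b mod 3) (c mod 3) mod 3"
proof -
  have "[Nf (a::int) b c = Nf (a mod 3) (b mod 3) (c mod 3)] (mod 3)"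
    unfolding Nf_def by (intro cong_add cong_mult cong_diff cong_uminus cong_refl) (simp_all add: cong_def)
  thus ?thesis by (simp add: cong_def)
qed

lemma Nf_3dvd: assumes "(3::int) dvd Nf a b c" shows "3 dvd a \<and> 3 dvd b \<and> 3 dvd c"
proof -
  have r: "x mod 3 \<in> {0,1,2}" for x :: int by auto
  have "Nf (a mod 3) (b mod 3) (c mod 3) mod 3 = 0" using assms Nf_mod3[of a b c] by simp
  hence "a mod 3 = 0 \<and> b mod 3 = 0 \<and> c mod 3 = 0"
    using r[of a] r[of b] r[of c] by (auto simp: Nf_def)
  thus ?thesis by auto
qed

lemma Nf_hom: "Nf (k*a) (k*b) (k*c) = k^3 * Nf a b c"
  unfolding Nf_def by (simp add: power3_eq_cube algebra_simps)

lemma Nf_int_zero: "Nf (a::int) b c = 0 \<Longrightarrow> a = 0 \<and> b = 0 \<and> c = 0"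
proof (induction "nat (\<bar>a\<bar> + \<bar>b\<bar> + \<bar>c\<bar>)" arbitrary: a b c rule: less_induct)
  case less
  from less.prems have "3 dvd a \<and> 3 dvd b \<and> 3 dvd c" by (intro Nf_3dvd) simp
  then obtain a' b' c' where abc: "a = 3*a'" "b = 3*b'" "c = 3*c'" by (auto elim!: dvdE)
  have "27 * Nf a' b' c' = 0" using less.prems Nf_hom[of 3 a' b' c'] abc by simp
  hence z: "Nf a' b' c' = 0" by simp
  show ?case
  proof (cases "a' = 0 \<and> b' = 0 \<and> c' = 0")
    case True thus ?thesis using abc by simp
  next
    case False
    hence "nat (\<bar>a'\<bar> + \<bar>b'\<bar> + \<bar>c'\<bar>) < nat (\<bar>a\<bar> + \<bar>b\<bar> + \<bar>c\<bar>)" using abc by auto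
    from less.hyps[OF this z] False show ?thesis by simp
  qed
qed



lemma E_le_iff: "E a b c \<le> E d e f \<longleftrightarrow> 0 \<le> E (d-a) (e-b) (f-c)"
  unfolding E_def by (simp add: algebra_simps)
lemma E_less_iff: "E a b c < E d e f \<longleftrightarrow> 0 < E (d-a) (e-b) (f-c)"
  unfolding E_def by (simp add: algebra_simps)
lemma E_000: "E 0 0 0 = 0" unfolding E_def by simp

lemma bnd_b: "b*lam \<ge> (if 0 \<le> b then b*0.5436890126 else b*(0.5436890127::real))"
proof (cases "0 \<le> b")
  case True
  have "b*0.5436890126 \<le> b*lam" by (rule mult_left_mono) (use lam_lo True in auto)
  thus ?thesis using True by simp
next
  case False
  have "b*0.5436890127 \<le> b*lam" by (rule mult_left_mono_neg) (use lam_hi False in auto)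
  thus ?thesis using False by simp
qed

lemma bnd_c: "c*lam^2 \<ge> (if 0 \<le> c then c*0.5436890126^2 else c*(0.5436890127::real)^2)"
proof (cases "0 \<le> c")
  case True
  have "c*0.5436890126^2 \<le> c*lam^2" by (rule mult_left_mono) (use lam2_lo True in auto)
  thus ?thesis using True by simp
next
  case False
  have "c*0.5436890127^2 \<le> c*lam^2" by (rule mult_left_mono_neg) (use lam2_hi False in auto)
  thus ?thesis using False by simp
qed

lemma E_nonneg_suff:
  assumes "0 \<le> a + (if 0 \<le> b then b*0.5436890126 else b*0.5436890127) + (if 0 \<le> c then c*0.5436890126^2 else c*0.5436890127^2)"
  shows "0 \<le> E a b c"
proof -
  have "b*lam \<ge> (if 0 \<le> b then b*0.5436890126 else b*0.5436890127)"
    using bnd_b by blast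
  moreover have "c*lam^2 \<ge> (if 0 \<le> c then c*0.5436890126^2 else c*0.5436890127^2)"
    using bnd_c by blast
  ultimately show ?thesis using assms unfolding E_def by linarith
qed

lemma E_pos_suff:
  assumes "0 < a + (if 0 \<le> b then b*0.5436890126 else b*0.5436890127) + (if 0 \<le> c then c*0.5436890126^2 else c*0.5436890127^2)"
  shows "0 < E a b c"
proof -
  have "b*lam \<ge> (if 0 \<le> b then b*0.5436890126 else b*0.5436890127)"
    using bnd_b by blast
  moreover have "c*lam^2 \<ge> (if 0 \<le> c then c*0.5436890126^2 else c*0.5436890127^2)"
    using bnd_c by blast
  ultimately show ?thesis using assms unfolding E_def by linarith
qed

lemma omega_E: "omega = E 1 (-1) (-1)" unfolding omega_def E_def lam3 by simp
lemma omega_mult: "omega * E a b c = E (a - b) (-a + 2*b - c) (-a + 2*c)"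
  unfolding omega_E E_mult by (rule arg_cong3[where f=E]) algebra+

lemma tau_E: "tau 0 = E 0 1 1" "tau 1 = E (-1) 3 0" "tau 2 = E 0 1 (-1)" "tau 3 = E (-1) 2 1"
  "tau 4 = E 1 (-1) (-1)" "tau 5 = E 0 1 (-1)" "tau 6 = E 0 (-1) 0"
  by (simp_all add: tau_def tau_list_def E_def)

lemma tau_S: "tau 0 = E 0 1 1" "tau (Suc 0) = E (-1) 3 0" "tau (Suc (Suc 0)) = E 0 1 (-1)" "tau (Suc (Suc (Suc 0))) = E (-1) 2 1"
  "tau (Suc (Suc (Suc (Suc 0)))) = E 1 (-1) (-1)" "tau (Suc (Suc (Suc (Suc (Suc 0))))) = E 0 1 (-1)" "tau (Suc (Suc (Suc (Suc (Suc (Suc 0)))))) = E 0 (-1) 0"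
  by (simp_all add: tau_def tau_list_def E_def)

lemma digit_Suc: "digit (j, Suc t) = digit (j,t) + tau (p j t)"
  by (simp add: digit_def)
lemma digit_0: "digit (j, 0) = E 0 0 0" by (simp add: digit_def E_def)

definition aa :: "nat \<Rightarrow> real" where
  "aa i = [E 0 0 0, E 1 (-1) (-1), E 1 (-2) 1, E (3/2) (-2) (-1/2), E (1/2) 0 (-1/2), E (-1/2) 1 (3/2), E 0 1 0, E 1 0 0] ! i"

definition topc :: "nat \<Rightarrow> nat \<times> nat" where
  "topc i = [(6,0),(1,9),(2,6),(3,2),(4,6),(5,3),(6,1)] ! i"

definition Lp :: "nat \<times> nat \<Rightarrow> real" where "Lp s = digit s + omega * aa (fst s)"

definition Rp :: "nat \<times> nat \<Rightarrow> real" where "Rp s = digit s + omega * aa (Suc (fst s))"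

definition sl :: "(nat \<times> nat) list" where
  "sl = [(0,0), (1,0), (2,0), (3,0), (4,0), (5,0), (6,0), (1,4), (2,4), (3,4), (5,8), (1,9), (2,9), (4,5), (5,5), (1,6), (2,6), (3,6), (5,10), (1,11), (0,2), (1,2), (2,2), (3,2), (4,2), (5,2), (6,2), (2,10), (4,6), (5,6), (1,7), (2,7), (4,3), (5,3), (6,3), (2,11), (4,7), (3,7), (5,11), (1,12), (0,3), (1,3), (2,3), (3,3), (5,7), (1,8), (2,8), (4,4), (5,4), (1,5), (2,5), (3,5), (5,9), (1,10), (0,1), (1,1), (2,1), (3,1), (4,1), (5,1), (6,1)]"

definition rk :: "nat \<times> nat \<Rightarrow> nat" where
  "rk s = [[0,54,20,40], [1,55,21,41,7,49,15,30,45,11,53,19,39], [2,56,22,42,8,50,16,31,46,12,27,35], [3,57,23,43,9,51,17,37], [4,58,24,32,47,13,28,36], [5,59,25,33,48,14,29,44,10,52,18,38], [6,60,26,34]] ! fst s ! snd s"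

definition ccl :: "real list" where
  "ccl = [E 0 0 0, E 2 (-2) (-3), E 3 (-6) 1, E (7/2) (-5) (-5/2), E (1/2) 0 (-3/2), E (-3/2) 1 (7/2), E (-1) 2 0, E 1 (-1) (-1), E 2 (-5) 3, E (5/2) (-4) (-1/2), E (-1/2) 1 (1/2), E 0 2 (-3), E 1 (-2) 1, E (3/2) (-1) (-5/2), E (-1/2) 0 (5/2), E 0 1 (-1), E 1 (-3) 3, E (3/2) (-2) (-1/2), E (-3/2) 3 (1/2), E (-1) 4 (-3), E 0 0 1, E 2 (-2) (-2), E 3 (-6) 2, E (7/2) (-5) (-3/2), E (1/2) 0 (-1/2), E (-3/2) 1 (9/2), E (-1) 2 1, E 1 (-1) 0, E (3/2) 0 (-7/2), E (-1/2) 1 (3/2), E 0 2 (-2), E 1 (-2) 2, E (3/2) (-1) (-3/2), E (-1/2) 0 (7/2), E 0 1 0, E 2 (-2) (-1), E (5/2) (-1) (-9/2), E (1/2) 0 (1/2), E (-5/2) 5 (3/2), E (-2) 6 (-2), E (-1) 2 2, E 1 0 (-1), E 2 (-4) 3, E (5/2) (-3) (-1/2), E (-1/2) 2 (1/2), E 0 3 (-3), E 1 (-1) 1, E (3/2) 0 (-5/2), E (-1/2) 1 (5/2), E 0 2 (-1), E 1 (-2) 3, E (3/2) (-1) (-1/2), E (-3/2) 4 (1/2), E (-1) 5 (-3), E 0 1 1, E 2 (-1) (-2), E 3 (-5) 2, E (7/2) (-4) (-3/2), E (1/2) 1 (-1/2), E (-3/2) 2 (9/2), E (-1) 3 1, E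 1 0 0]"

definition cc :: "nat \<Rightarrow> real" where "cc k = ccl ! min k 61"

definition Pc :: "nat \<Rightarrow> nat \<Rightarrow> bool" where
  "Pc j t \<longleftrightarrow> E 0 0 0 \<le> digit (j,t) \<and> digit (j,t) \<le> E 1 0 0 \<and> p j t \<le> 6 \<and> aa (p j t) \<le> Lp (j,t) \<and>
     (if (j,t) = topc (p j t) then Rp (j,t) = aa (Suc (p j t)) else Rp (j,t) < aa (Suc (p j t))) \<and>
     Lp (j,t) = cc (rk (j,t)) \<and> Rp (j,t) = cc (Suc (rk (j,t))) \<and> sl ! (rk (j,t)) = (j,t) \<and> rk (j,t) < 61"

lemma d_0_0: "digit (0,0) = E 0 0 0"
  by (simp add: numeral_eq_Suc digit_Suc digit_0 p_def path_list_def tau_S E_add)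

lemma pc_0_0: "Pc 0 0"
  unfolding Pc_def Lp_def Rp_def d_0_0 by (simp add: p_def path_list_def aa_def topc_def rk_def sl_def cc_def ccl_def omega_mult E_add E_le_iff E_less_iff E_000 E_nonneg_suff E_pos_suff power2_eq_square)

lemma d_0_1: "digit (0,1) = E 0 1 1"
  by (simp add: numeral_eq_Suc digit_Suc digit_0 p_def path_list_def tau_S E_add)

lemma pc_0_1: "Pc 0 1"
  unfolding Pc_def Lp_def Rp_def d_0_1 by (simp add: p_def path_list_def aa_def topc_def rk_def sl_def cc_def ccl_def omega_mult E_add E_le_iff E_less_iff E_000 E_nonneg_suff E_pos_suff power2_eq_square)

lemma d_0_2: "digit (0,2) = E 0 0 1"
  by (simp add: numeral_eq_Suc digit_Suc digit_0 p_def path_list_def tau_S E_add)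

lemma pc_0_2: "Pc 0 2"
  unfolding Pc_def Lp_def Rp_def d_0_2 by (simp add: p_def path_list_def aa_def topc_def rk_def sl_def cc_def ccl_def omega_mult E_add E_le_iff E_less_iff E_000 E_nonneg_suff E_pos_suff power2_eq_square)

lemma d_0_3: "digit (0,3) = E (-1) 2 2"
  by (simp add: numeral_eq_Suc digit_Suc digit_0 p_def path_list_def tau_S E_add)

lemma pc_0_3: "Pc 0 3"
  unfolding Pc_def Lp_def Rp_def d_0_3 by (simp add: p_def path_list_def aa_def topc_def rk_def sl_def cc_def ccl_def omega_mult E_add E_le_iff E_less_iff E_000 E_nonneg_suff E_pos_suff power2_eq_square)

lemma d_1_0: "digit (1,0) = E 0 0 0"
  by (simp add: numeral_eq_Suc digit_Suc digit_0 p_def path_list_def tau_S E_add)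

lemma pc_1_0: "Pc 1 0"
  unfolding Pc_def Lp_def Rp_def d_1_0 by (simp add: p_def path_list_def aa_def topc_def rk_def sl_def cc_def ccl_def omega_mult E_add E_le_iff E_less_iff E_000 E_nonneg_suff E_pos_suff power2_eq_square)

lemma d_1_1: "digit (1,1) = E 0 1 1"
  by (simp add: numeral_eq_Suc digit_Suc digit_0 p_def path_list_def tau_S E_add)

lemma pc_1_1: "Pc 1 1"
  unfolding Pc_def Lp_def Rp_def d_1_1 by (simp add: p_def path_list_def aa_def topc_def rk_def sl_def cc_def ccl_def omega_mult E_add E_le_iff E_less_iff E_000 E_nonneg_suff E_pos_suff power2_eq_square)

lemma d_1_2: "digit (1,2) = E 0 0 1"
  by (simp add: numeral_eq_Suc digit_Suc digit_0 p_def path_list_def tau_S E_add)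

lemma pc_1_2: "Pc 1 2"
  unfolding Pc_def Lp_def Rp_def d_1_2 by (simp add: p_def path_list_def aa_def topc_def rk_def sl_def cc_def ccl_def omega_mult E_add E_le_iff E_less_iff E_000 E_nonneg_suff E_pos_suff power2_eq_square)

lemma d_1_3: "digit (1,3) = E (-1) 2 2"
  by (simp add: numeral_eq_Suc digit_Suc digit_0 p_def path_list_def tau_S E_add)

lemma pc_1_3: "Pc 1 3"
  unfolding Pc_def Lp_def Rp_def d_1_3 by (simp add: p_def path_list_def aa_def topc_def rk_def sl_def cc_def ccl_def omega_mult E_add E_le_iff E_less_iff E_000 E_nonneg_suff E_pos_suff power2_eq_square)

lemma d_1_4: "digit (1,4) = E (-1) 1 2"
  by (simp add: numeral_eq_Suc digit_Suc digit_0 p_def path_list_def tau_S E_add)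

lemma pc_1_4: "Pc 1 4"
  unfolding Pc_def Lp_def Rp_def d_1_4 by (simp add: p_def path_list_def aa_def topc_def rk_def sl_def cc_def ccl_def omega_mult E_add E_le_iff E_less_iff E_000 E_nonneg_suff E_pos_suff power2_eq_square)

lemma d_1_5: "digit (1,5) = E (-2) 4 2"
  by (simp add: numeral_eq_Suc digit_Suc digit_0 p_def path_list_def tau_S E_add)

lemma pc_1_5: "Pc 1 5"
  unfolding Pc_def Lp_def Rp_def d_1_5 by (simp add: p_def path_list_def aa_def topc_def rk_def sl_def cc_def ccl_def omega_mult E_add E_le_iff E_less_iff E_000 E_nonneg_suff E_pos_suff power2_eq_square)

lemma d_1_6: "digit (1,6) = E (-2) 3 2"
  by (simp add: numeral_eq_Suc digit_Suc digit_0 p_def path_list_def tau_S E_add)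

lemma pc_1_6: "Pc 1 6"
  unfolding Pc_def Lp_def Rp_def d_1_6 by (simp add: p_def path_list_def aa_def topc_def rk_def sl_def cc_def ccl_def omega_mult E_add E_le_iff E_less_iff E_000 E_nonneg_suff E_pos_suff power2_eq_square)

lemma d_1_7: "digit (1,7) = E (-2) 4 1"
  by (simp add: numeral_eq_Suc digit_Suc digit_0 p_def path_list_def tau_S E_add)

lemma pc_1_7: "Pc 1 7"
  unfolding Pc_def Lp_def Rp_def d_1_7 by (simp add: p_def path_list_def aa_def topc_def rk_def sl_def cc_def ccl_def omega_mult E_add E_le_iff E_less_iff E_000 E_nonneg_suff E_pos_suff power2_eq_square)

lemma d_1_8: "digit (1,8) = E (-2) 5 0"
  by (simp add: numeral_eq_Suc digit_Suc digit_0 p_def path_list_def tau_S E_add)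

lemma pc_1_8: "Pc 1 8"
  unfolding Pc_def Lp_def Rp_def d_1_8 by (simp add: p_def path_list_def aa_def topc_def rk_def sl_def cc_def ccl_def omega_mult E_add E_le_iff E_less_iff E_000 E_nonneg_suff E_pos_suff power2_eq_square)

lemma d_1_9: "digit (1,9) = E (-2) 4 0"
  by (simp add: numeral_eq_Suc digit_Suc digit_0 p_def path_list_def tau_S E_add)

lemma pc_1_9: "Pc 1 9"
  unfolding Pc_def Lp_def Rp_def d_1_9 by (simp add: p_def path_list_def aa_def topc_def rk_def sl_def cc_def ccl_def omega_mult E_add E_le_iff E_less_iff E_000 E_nonneg_suff E_pos_suff power2_eq_square)

lemma d_1_10: "digit (1,10) = E (-3) 7 0"
  by (simp add: numeral_eq_Suc digit_Suc digit_0 p_def path_list_def tau_S E_add)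

lemma pc_1_10: "Pc 1 10"
  unfolding Pc_def Lp_def Rp_def d_1_10 by (simp add: p_def path_list_def aa_def topc_def rk_def sl_def cc_def ccl_def omega_mult E_add E_le_iff E_less_iff E_000 E_nonneg_suff E_pos_suff power2_eq_square)

lemma d_1_11: "digit (1,11) = E (-3) 6 0"
  by (simp add: numeral_eq_Suc digit_Suc digit_0 p_def path_list_def tau_S E_add)

lemma pc_1_11: "Pc 1 11"
  unfolding Pc_def Lp_def Rp_def d_1_11 by (simp add: p_def path_list_def aa_def topc_def rk_def sl_def cc_def ccl_def omega_mult E_add E_le_iff E_less_iff E_000 E_nonneg_suff E_pos_suff power2_eq_square)

lemma d_1_12: "digit (1,12) = E (-4) 8 1"
  by (simp add: numeral_eq_Suc digit_Suc digit_0 p_def path_list_def tau_S E_add)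

lemma pc_1_12: "Pc 1 12"
  unfolding Pc_def Lp_def Rp_def d_1_12 by (simp add: p_def path_list_def aa_def topc_def rk_def sl_def cc_def ccl_def omega_mult E_add E_le_iff E_less_iff E_000 E_nonneg_suff E_pos_suff power2_eq_square)

lemma d_2_0: "digit (2,0) = E 0 0 0"
  by (simp add: numeral_eq_Suc digit_Suc digit_0 p_def path_list_def tau_S E_add)

lemma pc_2_0: "Pc 2 0"
  unfolding Pc_def Lp_def Rp_def d_2_0 by (simp add: p_def path_list_def aa_def topc_def rk_def sl_def cc_def ccl_def omega_mult E_add E_le_iff E_less_iff E_000 E_nonneg_suff E_pos_suff power2_eq_square)

lemma d_2_1: "digit (2,1) = E 0 1 1"
  by (simp add: numeral_eq_Suc digit_Suc digit_0 p_def path_list_def tau_S E_add)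

lemma pc_2_1: "Pc 2 1"
  unfolding Pc_def Lp_def Rp_def d_2_1 by (simp add: p_def path_list_def aa_def topc_def rk_def sl_def cc_def ccl_def omega_mult E_add E_le_iff E_less_iff E_000 E_nonneg_suff E_pos_suff power2_eq_square)

lemma d_2_2: "digit (2,2) = E 0 0 1"
  by (simp add: numeral_eq_Suc digit_Suc digit_0 p_def path_list_def tau_S E_add)

lemma pc_2_2: "Pc 2 2"
  unfolding Pc_def Lp_def Rp_def d_2_2 by (simp add: p_def path_list_def aa_def topc_def rk_def sl_def cc_def ccl_def omega_mult E_add E_le_iff E_less_iff E_000 E_nonneg_suff E_pos_suff power2_eq_square)

lemma d_2_3: "digit (2,3) = E (-1) 2 2"
  by (simp add: numeral_eq_Suc digit_Suc digit_0 p_def path_list_def tau_S E_add)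

lemma pc_2_3: "Pc 2 3"
  unfolding Pc_def Lp_def Rp_def d_2_3 by (simp add: p_def path_list_def aa_def topc_def rk_def sl_def cc_def ccl_def omega_mult E_add E_le_iff E_less_iff E_000 E_nonneg_suff E_pos_suff power2_eq_square)

lemma d_2_4: "digit (2,4) = E (-1) 1 2"
  by (simp add: numeral_eq_Suc digit_Suc digit_0 p_def path_list_def tau_S E_add)

lemma pc_2_4: "Pc 2 4"
  unfolding Pc_def Lp_def Rp_def d_2_4 by (simp add: p_def path_list_def aa_def topc_def rk_def sl_def cc_def ccl_def omega_mult E_add E_le_iff E_less_iff E_000 E_nonneg_suff E_pos_suff power2_eq_square)

lemma d_2_5: "digit (2,5) = E (-2) 4 2"
  by (simp add: numeral_eq_Suc digit_Suc digit_0 p_def path_list_def tau_S E_add)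

lemma pc_2_5: "Pc 2 5"
  unfolding Pc_def Lp_def Rp_def d_2_5 by (simp add: p_def path_list_def aa_def topc_def rk_def sl_def cc_def ccl_def omega_mult E_add E_le_iff E_less_iff E_000 E_nonneg_suff E_pos_suff power2_eq_square)

lemma d_2_6: "digit (2,6) = E (-2) 3 2"
  by (simp add: numeral_eq_Suc digit_Suc digit_0 p_def path_list_def tau_S E_add)

lemma pc_2_6: "Pc 2 6"
  unfolding Pc_def Lp_def Rp_def d_2_6 by (simp add: p_def path_list_def aa_def topc_def rk_def sl_def cc_def ccl_def omega_mult E_add E_le_iff E_less_iff E_000 E_nonneg_suff E_pos_suff power2_eq_square)

lemma d_2_7: "digit (2,7) = E (-2) 4 1"
  by (simp add: numeral_eq_Suc digit_Suc digit_0 p_def path_list_def tau_S E_add)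

lemma pc_2_7: "Pc 2 7"
  unfolding Pc_def Lp_def Rp_def d_2_7 by (simp add: p_def path_list_def aa_def topc_def rk_def sl_def cc_def ccl_def omega_mult E_add E_le_iff E_less_iff E_000 E_nonneg_suff E_pos_suff power2_eq_square)

lemma d_2_8: "digit (2,8) = E (-2) 5 0"
  by (simp add: numeral_eq_Suc digit_Suc digit_0 p_def path_list_def tau_S E_add)

lemma pc_2_8: "Pc 2 8"
  unfolding Pc_def Lp_def Rp_def d_2_8 by (simp add: p_def path_list_def aa_def topc_def rk_def sl_def cc_def ccl_def omega_mult E_add E_le_iff E_less_iff E_000 E_nonneg_suff E_pos_suff power2_eq_square)

lemma d_2_9: "digit (2,9) = E (-2) 4 0"
  by (simp add: numeral_eq_Suc digit_Suc digit_0 p_def path_list_def tau_S E_add)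

lemma pc_2_9: "Pc 2 9"
  unfolding Pc_def Lp_def Rp_def d_2_9 by (simp add: p_def path_list_def aa_def topc_def rk_def sl_def cc_def ccl_def omega_mult E_add E_le_iff E_less_iff E_000 E_nonneg_suff E_pos_suff power2_eq_square)

lemma d_2_10: "digit (2,10) = E (-2) 5 (-1)"
  by (simp add: numeral_eq_Suc digit_Suc digit_0 p_def path_list_def tau_S E_add)

lemma pc_2_10: "Pc 2 10"
  unfolding Pc_def Lp_def Rp_def d_2_10 by (simp add: p_def path_list_def aa_def topc_def rk_def sl_def cc_def ccl_def omega_mult E_add E_le_iff E_less_iff E_000 E_nonneg_suff E_pos_suff power2_eq_square)

lemma d_2_11: "digit (2,11) = E (-1) 4 (-2)"
  by (simp add: numeral_eq_Suc digit_Suc digit_0 p_def path_list_def tau_S E_add)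

lemma pc_2_11: "Pc 2 11"
  unfolding Pc_def Lp_def Rp_def d_2_11 by (simp add: p_def path_list_def aa_def topc_def rk_def sl_def cc_def ccl_def omega_mult E_add E_le_iff E_less_iff E_000 E_nonneg_suff E_pos_suff power2_eq_square)

lemma d_3_0: "digit (3,0) = E 0 0 0"
  by (simp add: numeral_eq_Suc digit_Suc digit_0 p_def path_list_def tau_S E_add)

lemma pc_3_0: "Pc 3 0"
  unfolding Pc_def Lp_def Rp_def d_3_0 by (simp add: p_def path_list_def aa_def topc_def rk_def sl_def cc_def ccl_def omega_mult E_add E_le_iff E_less_iff E_000 E_nonneg_suff E_pos_suff power2_eq_square)

lemma d_3_1: "digit (3,1) = E 0 1 1"
  by (simp add: numeral_eq_Suc digit_Suc digit_0 p_def path_list_def tau_S E_add)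

lemma pc_3_1: "Pc 3 1"
  unfolding Pc_def Lp_def Rp_def d_3_1 by (simp add: p_def path_list_def aa_def topc_def rk_def sl_def cc_def ccl_def omega_mult E_add E_le_iff E_less_iff E_000 E_nonneg_suff E_pos_suff power2_eq_square)

lemma d_3_2: "digit (3,2) = E 0 0 1"
  by (simp add: numeral_eq_Suc digit_Suc digit_0 p_def path_list_def tau_S E_add)

lemma pc_3_2: "Pc 3 2"
  unfolding Pc_def Lp_def Rp_def d_3_2 by (simp add: p_def path_list_def aa_def topc_def rk_def sl_def cc_def ccl_def omega_mult E_add E_le_iff E_less_iff E_000 E_nonneg_suff E_pos_suff power2_eq_square)

lemma d_3_3: "digit (3,3) = E (-1) 2 2"
  by (simp add: numeral_eq_Suc digit_Suc digit_0 p_def path_list_def tau_S E_add)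

lemma pc_3_3: "Pc 3 3"
  unfolding Pc_def Lp_def Rp_def d_3_3 by (simp add: p_def path_list_def aa_def topc_def rk_def sl_def cc_def ccl_def omega_mult E_add E_le_iff E_less_iff E_000 E_nonneg_suff E_pos_suff power2_eq_square)

lemma d_3_4: "digit (3,4) = E (-1) 1 2"
  by (simp add: numeral_eq_Suc digit_Suc digit_0 p_def path_list_def tau_S E_add)

lemma pc_3_4: "Pc 3 4"
  unfolding Pc_def Lp_def Rp_def d_3_4 by (simp add: p_def path_list_def aa_def topc_def rk_def sl_def cc_def ccl_def omega_mult E_add E_le_iff E_less_iff E_000 E_nonneg_suff E_pos_suff power2_eq_square)

lemma d_3_5: "digit (3,5) = E (-2) 4 2"
  by (simp add: numeral_eq_Suc digit_Suc digit_0 p_def path_list_def tau_S E_add)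

lemma pc_3_5: "Pc 3 5"
  unfolding Pc_def Lp_def Rp_def d_3_5 by (simp add: p_def path_list_def aa_def topc_def rk_def sl_def cc_def ccl_def omega_mult E_add E_le_iff E_less_iff E_000 E_nonneg_suff E_pos_suff power2_eq_square)

lemma d_3_6: "digit (3,6) = E (-2) 3 2"
  by (simp add: numeral_eq_Suc digit_Suc digit_0 p_def path_list_def tau_S E_add)

lemma pc_3_6: "Pc 3 6"
  unfolding Pc_def Lp_def Rp_def d_3_6 by (simp add: p_def path_list_def aa_def topc_def rk_def sl_def cc_def ccl_def omega_mult E_add E_le_iff E_less_iff E_000 E_nonneg_suff E_pos_suff power2_eq_square)

lemma d_3_7: "digit (3,7) = E (-3) 5 3"
  by (simp add: numeral_eq_Suc digit_Suc digit_0 p_def path_list_def tau_S E_add)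

lemma pc_3_7: "Pc 3 7"
  unfolding Pc_def Lp_def Rp_def d_3_7 by (simp add: p_def path_list_def aa_def topc_def rk_def sl_def cc_def ccl_def omega_mult E_add E_le_iff E_less_iff E_000 E_nonneg_suff E_pos_suff power2_eq_square)

lemma d_4_0: "digit (4,0) = E 0 0 0"
  by (simp add: numeral_eq_Suc digit_Suc digit_0 p_def path_list_def tau_S E_add)

lemma pc_4_0: "Pc 4 0"
  unfolding Pc_def Lp_def Rp_def d_4_0 by (simp add: p_def path_list_def aa_def topc_def rk_def sl_def cc_def ccl_def omega_mult E_add E_le_iff E_less_iff E_000 E_nonneg_suff E_pos_suff power2_eq_square)

lemma d_4_1: "digit (4,1) = E 0 1 1"
  by (simp add: numeral_eq_Suc digit_Suc digit_0 p_def path_list_def tau_S E_add)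

lemma pc_4_1: "Pc 4 1"
  unfolding Pc_def Lp_def Rp_def d_4_1 by (simp add: p_def path_list_def aa_def topc_def rk_def sl_def cc_def ccl_def omega_mult E_add E_le_iff E_less_iff E_000 E_nonneg_suff E_pos_suff power2_eq_square)

lemma d_4_2: "digit (4,2) = E 0 0 1"
  by (simp add: numeral_eq_Suc digit_Suc digit_0 p_def path_list_def tau_S E_add)

lemma pc_4_2: "Pc 4 2"
  unfolding Pc_def Lp_def Rp_def d_4_2 by (simp add: p_def path_list_def aa_def topc_def rk_def sl_def cc_def ccl_def omega_mult E_add E_le_iff E_less_iff E_000 E_nonneg_suff E_pos_suff power2_eq_square)

lemma d_4_3: "digit (4,3) = E 1 (-1) 0"
  by (simp add: numeral_eq_Suc digit_Suc digit_0 p_def path_list_def tau_S E_add)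

lemma pc_4_3: "Pc 4 3"
  unfolding Pc_def Lp_def Rp_def d_4_3 by (simp add: p_def path_list_def aa_def topc_def rk_def sl_def cc_def ccl_def omega_mult E_add E_le_iff E_less_iff E_000 E_nonneg_suff E_pos_suff power2_eq_square)

lemma d_4_4: "digit (4,4) = E 1 0 (-1)"
  by (simp add: numeral_eq_Suc digit_Suc digit_0 p_def path_list_def tau_S E_add)

lemma pc_4_4: "Pc 4 4"
  unfolding Pc_def Lp_def Rp_def d_4_4 by (simp add: p_def path_list_def aa_def topc_def rk_def sl_def cc_def ccl_def omega_mult E_add E_le_iff E_less_iff E_000 E_nonneg_suff E_pos_suff power2_eq_square)

lemma d_4_5: "digit (4,5) = E 1 (-1) (-1)"
  by (simp add: numeral_eq_Suc digit_Suc digit_0 p_def path_list_def tau_S E_add)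

lemma pc_4_5: "Pc 4 5"
  unfolding Pc_def Lp_def Rp_def d_4_5 by (simp add: p_def path_list_def aa_def topc_def rk_def sl_def cc_def ccl_def omega_mult E_add E_le_iff E_less_iff E_000 E_nonneg_suff E_pos_suff power2_eq_square)

lemma d_4_6: "digit (4,6) = E 1 0 (-2)"
  by (simp add: numeral_eq_Suc digit_Suc digit_0 p_def path_list_def tau_S E_add)

lemma pc_4_6: "Pc 4 6"
  unfolding Pc_def Lp_def Rp_def d_4_6 by (simp add: p_def path_list_def aa_def topc_def rk_def sl_def cc_def ccl_def omega_mult E_add E_le_iff E_less_iff E_000 E_nonneg_suff E_pos_suff power2_eq_square)

lemma d_4_7: "digit (4,7) = E 2 (-1) (-3)"
  by (simp add: numeral_eq_Suc digit_Suc digit_0 p_def path_list_def tau_S E_add)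

lemma pc_4_7: "Pc 4 7"
  unfolding Pc_def Lp_def Rp_def d_4_7 by (simp add: p_def path_list_def aa_def topc_def rk_def sl_def cc_def ccl_def omega_mult E_add E_le_iff E_less_iff E_000 E_nonneg_suff E_pos_suff power2_eq_square)

lemma d_5_0: "digit (5,0) = E 0 0 0"
  by (simp add: numeral_eq_Suc digit_Suc digit_0 p_def path_list_def tau_S E_add)

lemma pc_5_0: "Pc 5 0"
  unfolding Pc_def Lp_def Rp_def d_5_0 by (simp add: p_def path_list_def aa_def topc_def rk_def sl_def cc_def ccl_def omega_mult E_add E_le_iff E_less_iff E_000 E_nonneg_suff E_pos_suff power2_eq_square)

lemma d_5_1: "digit (5,1) = E 0 1 1"
  by (simp add: numeral_eq_Suc digit_Suc digit_0 p_def path_list_def tau_S E_add)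

lemma pc_5_1: "Pc 5 1"
  unfolding Pc_def Lp_def Rp_def d_5_1 by (simp add: p_def path_list_def aa_def topc_def rk_def sl_def cc_def ccl_def omega_mult E_add E_le_iff E_less_iff E_000 E_nonneg_suff E_pos_suff power2_eq_square)

lemma d_5_2: "digit (5,2) = E 0 0 1"
  by (simp add: numeral_eq_Suc digit_Suc digit_0 p_def path_list_def tau_S E_add)

lemma pc_5_2: "Pc 5 2"
  unfolding Pc_def Lp_def Rp_def d_5_2 by (simp add: p_def path_list_def aa_def topc_def rk_def sl_def cc_def ccl_def omega_mult E_add E_le_iff E_less_iff E_000 E_nonneg_suff E_pos_suff power2_eq_square)

lemma d_5_3: "digit (5,3) = E 1 (-1) 0"
  by (simp add: numeral_eq_Suc digit_Suc digit_0 p_def path_list_def tau_S E_add)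

lemma pc_5_3: "Pc 5 3"
  unfolding Pc_def Lp_def Rp_def d_5_3 by (simp add: p_def path_list_def aa_def topc_def rk_def sl_def cc_def ccl_def omega_mult E_add E_le_iff E_less_iff E_000 E_nonneg_suff E_pos_suff power2_eq_square)

lemma d_5_4: "digit (5,4) = E 1 0 (-1)"
  by (simp add: numeral_eq_Suc digit_Suc digit_0 p_def path_list_def tau_S E_add)

lemma pc_5_4: "Pc 5 4"
  unfolding Pc_def Lp_def Rp_def d_5_4 by (simp add: p_def path_list_def aa_def topc_def rk_def sl_def cc_def ccl_def omega_mult E_add E_le_iff E_less_iff E_000 E_nonneg_suff E_pos_suff power2_eq_square)

lemma d_5_5: "digit (5,5) = E 1 (-1) (-1)"
  by (simp add: numeral_eq_Suc digit_Suc digit_0 p_def path_list_def tau_S E_add)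

lemma pc_5_5: "Pc 5 5"
  unfolding Pc_def Lp_def Rp_def d_5_5 by (simp add: p_def path_list_def aa_def topc_def rk_def sl_def cc_def ccl_def omega_mult E_add E_le_iff E_less_iff E_000 E_nonneg_suff E_pos_suff power2_eq_square)

lemma d_5_6: "digit (5,6) = E 1 0 (-2)"
  by (simp add: numeral_eq_Suc digit_Suc digit_0 p_def path_list_def tau_S E_add)

lemma pc_5_6: "Pc 5 6"
  unfolding Pc_def Lp_def Rp_def d_5_6 by (simp add: p_def path_list_def aa_def topc_def rk_def sl_def cc_def ccl_def omega_mult E_add E_le_iff E_less_iff E_000 E_nonneg_suff E_pos_suff power2_eq_square)

lemma d_5_7: "digit (5,7) = E 1 1 (-3)"
  by (simp add: numeral_eq_Suc digit_Suc digit_0 p_def path_list_def tau_S E_add)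

lemma pc_5_7: "Pc 5 7"
  unfolding Pc_def Lp_def Rp_def d_5_7 by (simp add: p_def path_list_def aa_def topc_def rk_def sl_def cc_def ccl_def omega_mult E_add E_le_iff E_less_iff E_000 E_nonneg_suff E_pos_suff power2_eq_square)

lemma d_5_8: "digit (5,8) = E 1 0 (-3)"
  by (simp add: numeral_eq_Suc digit_Suc digit_0 p_def path_list_def tau_S E_add)

lemma pc_5_8: "Pc 5 8"
  unfolding Pc_def Lp_def Rp_def d_5_8 by (simp add: p_def path_list_def aa_def topc_def rk_def sl_def cc_def ccl_def omega_mult E_add E_le_iff E_less_iff E_000 E_nonneg_suff E_pos_suff power2_eq_square)

lemma d_5_9: "digit (5,9) = E 0 3 (-3)"
  by (simp add: numeral_eq_Suc digit_Suc digit_0 p_def path_list_def tau_S E_add)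

lemma pc_5_9: "Pc 5 9"
  unfolding Pc_def Lp_def Rp_def d_5_9 by (simp add: p_def path_list_def aa_def topc_def rk_def sl_def cc_def ccl_def omega_mult E_add E_le_iff E_less_iff E_000 E_nonneg_suff E_pos_suff power2_eq_square)

lemma d_5_10: "digit (5,10) = E 0 2 (-3)"
  by (simp add: numeral_eq_Suc digit_Suc digit_0 p_def path_list_def tau_S E_add)

lemma pc_5_10: "Pc 5 10"
  unfolding Pc_def Lp_def Rp_def d_5_10 by (simp add: p_def path_list_def aa_def topc_def rk_def sl_def cc_def ccl_def omega_mult E_add E_le_iff E_less_iff E_000 E_nonneg_suff E_pos_suff power2_eq_square)

lemma d_5_11: "digit (5,11) = E (-1) 4 (-2)"
  by (simp add: numeral_eq_Suc digit_Suc digit_0 p_def path_list_def tau_S E_add)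

lemma pc_5_11: "Pc 5 11"
  unfolding Pc_def Lp_def Rp_def d_5_11 by (simp add: p_def path_list_def aa_def topc_def rk_def sl_def cc_def ccl_def omega_mult E_add E_le_iff E_less_iff E_000 E_nonneg_suff E_pos_suff power2_eq_square)

lemma d_6_0: "digit (6,0) = E 0 0 0"
  by (simp add: numeral_eq_Suc digit_Suc digit_0 p_def path_list_def tau_S E_add)

lemma pc_6_0: "Pc 6 0"
  unfolding Pc_def Lp_def Rp_def d_6_0 by (simp add: p_def path_list_def aa_def topc_def rk_def sl_def cc_def ccl_def omega_mult E_add E_le_iff E_less_iff E_000 E_nonneg_suff E_pos_suff power2_eq_square)

lemma d_6_1: "digit (6,1) = E 0 1 1"
  by (simp add: numeral_eq_Suc digit_Suc digit_0 p_def path_list_def tau_S E_add)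

lemma pc_6_1: "Pc 6 1"
  unfolding Pc_def Lp_def Rp_def d_6_1 by (simp add: p_def path_list_def aa_def topc_def rk_def sl_def cc_def ccl_def omega_mult E_add E_le_iff E_less_iff E_000 E_nonneg_suff E_pos_suff power2_eq_square)

lemma d_6_2: "digit (6,2) = E 0 0 1"
  by (simp add: numeral_eq_Suc digit_Suc digit_0 p_def path_list_def tau_S E_add)

lemma pc_6_2: "Pc 6 2"
  unfolding Pc_def Lp_def Rp_def d_6_2 by (simp add: p_def path_list_def aa_def topc_def rk_def sl_def cc_def ccl_def omega_mult E_add E_le_iff E_less_iff E_000 E_nonneg_suff E_pos_suff power2_eq_square)

lemma d_6_3: "digit (6,3) = E 1 (-1) 0"
  by (simp add: numeral_eq_Suc digit_Suc digit_0 p_def path_list_def tau_S E_add)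

lemma pc_6_3: "Pc 6 3"
  unfolding Pc_def Lp_def Rp_def d_6_3 by (simp add: p_def path_list_def aa_def topc_def rk_def sl_def cc_def ccl_def omega_mult E_add E_le_iff E_less_iff E_000 E_nonneg_suff E_pos_suff power2_eq_square)

lemma cm_0: "cc 0 \<le> cc 1"
  by (simp add: cc_def ccl_def E_le_iff E_less_iff E_000 E_nonneg_suff E_pos_suff power2_eq_square)

lemma cm_1: "cc 1 \<le> cc 2"
  by (simp add: cc_def ccl_def E_le_iff E_less_iff E_000 E_nonneg_suff E_pos_suff power2_eq_square)

lemma cm_2: "cc 2 \<le> cc 3"
  by (simp add: cc_def ccl_def E_le_iff E_less_iff E_000 E_nonneg_suff E_pos_suff power2_eq_square)

lemma cm_3: "cc 3 \<le> cc 4"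
  by (simp add: cc_def ccl_def E_le_iff E_less_iff E_000 E_nonneg_suff E_pos_suff power2_eq_square)

lemma cm_4: "cc 4 \<le> cc 5"
  by (simp add: cc_def ccl_def E_le_iff E_less_iff E_000 E_nonneg_suff E_pos_suff power2_eq_square)

lemma cm_5: "cc 5 \<le> cc 6"
  by (simp add: cc_def ccl_def E_le_iff E_less_iff E_000 E_nonneg_suff E_pos_suff power2_eq_square)

lemma cm_6: "cc 6 \<le> cc 7"
  by (simp add: cc_def ccl_def E_le_iff E_less_iff E_000 E_nonneg_suff E_pos_suff power2_eq_square)

lemma cm_7: "cc 7 \<le> cc 8"
  by (simp add: cc_def ccl_def E_le_iff E_less_iff E_000 E_nonneg_suff E_pos_suff power2_eq_square)

lemma cm_8: "cc 8 \<le> cc 9"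
  by (simp add: cc_def ccl_def E_le_iff E_less_iff E_000 E_nonneg_suff E_pos_suff power2_eq_square)

lemma cm_9: "cc 9 \<le> cc 10"
  by (simp add: cc_def ccl_def E_le_iff E_less_iff E_000 E_nonneg_suff E_pos_suff power2_eq_square)

lemma cm_10: "cc 10 \<le> cc 11"
  by (simp add: cc_def ccl_def E_le_iff E_less_iff E_000 E_nonneg_suff E_pos_suff power2_eq_square)

lemma cm_11: "cc 11 \<le> cc 12"
  by (simp add: cc_def ccl_def E_le_iff E_less_iff E_000 E_nonneg_suff E_pos_suff power2_eq_square)

lemma cm_12: "cc 12 \<le> cc 13"
  by (simp add: cc_def ccl_def E_le_iff E_less_iff E_000 E_nonneg_suff E_pos_suff power2_eq_square)

lemma cm_13: "cc 13 \<le> cc 14"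
  by (simp add: cc_def ccl_def E_le_iff E_less_iff E_000 E_nonneg_suff E_pos_suff power2_eq_square)

lemma cm_14: "cc 14 \<le> cc 15"
  by (simp add: cc_def ccl_def E_le_iff E_less_iff E_000 E_nonneg_suff E_pos_suff power2_eq_square)

lemma cm_15: "cc 15 \<le> cc 16"
  by (simp add: cc_def ccl_def E_le_iff E_less_iff E_000 E_nonneg_suff E_pos_suff power2_eq_square)

lemma cm_16: "cc 16 \<le> cc 17"
  by (simp add: cc_def ccl_def E_le_iff E_less_iff E_000 E_nonneg_suff E_pos_suff power2_eq_square)

lemma cm_17: "cc 17 \<le> cc 18"
  by (simp add: cc_def ccl_def E_le_iff E_less_iff E_000 E_nonneg_suff E_pos_suff power2_eq_square)

lemma cm_18: "cc 18 \<le> cc 19"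
  by (simp add: cc_def ccl_def E_le_iff E_less_iff E_000 E_nonneg_suff E_pos_suff power2_eq_square)

lemma cm_19: "cc 19 \<le> cc 20"
  by (simp add: cc_def ccl_def E_le_iff E_less_iff E_000 E_nonneg_suff E_pos_suff power2_eq_square)

lemma cm_20: "cc 20 \<le> cc 21"
  by (simp add: cc_def ccl_def E_le_iff E_less_iff E_000 E_nonneg_suff E_pos_suff power2_eq_square)

lemma cm_21: "cc 21 \<le> cc 22"
  by (simp add: cc_def ccl_def E_le_iff E_less_iff E_000 E_nonneg_suff E_pos_suff power2_eq_square)

lemma cm_22: "cc 22 \<le> cc 23"
  by (simp add: cc_def ccl_def E_le_iff E_less_iff E_000 E_nonneg_suff E_pos_suff power2_eq_square)

lemma cm_23: "cc 23 \<le> cc 24"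
  by (simp add: cc_def ccl_def E_le_iff E_less_iff E_000 E_nonneg_suff E_pos_suff power2_eq_square)

lemma cm_24: "cc 24 \<le> cc 25"
  by (simp add: cc_def ccl_def E_le_iff E_less_iff E_000 E_nonneg_suff E_pos_suff power2_eq_square)

lemma cm_25: "cc 25 \<le> cc 26"
  by (simp add: cc_def ccl_def E_le_iff E_less_iff E_000 E_nonneg_suff E_pos_suff power2_eq_square)

lemma cm_26: "cc 26 \<le> cc 27"
  by (simp add: cc_def ccl_def E_le_iff E_less_iff E_000 E_nonneg_suff E_pos_suff power2_eq_square)

lemma cm_27: "cc 27 \<le> cc 28"
  by (simp add: cc_def ccl_def E_le_iff E_less_iff E_000 E_nonneg_suff E_pos_suff power2_eq_square)

lemma cm_28: "cc 28 \<le> cc 29"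
  by (simp add: cc_def ccl_def E_le_iff E_less_iff E_000 E_nonneg_suff E_pos_suff power2_eq_square)

lemma cm_29: "cc 29 \<le> cc 30"
  by (simp add: cc_def ccl_def E_le_iff E_less_iff E_000 E_nonneg_suff E_pos_suff power2_eq_square)

lemma cm_30: "cc 30 \<le> cc 31"
  by (simp add: cc_def ccl_def E_le_iff E_less_iff E_000 E_nonneg_suff E_pos_suff power2_eq_square)

lemma cm_31: "cc 31 \<le> cc 32"
  by (simp add: cc_def ccl_def E_le_iff E_less_iff E_000 E_nonneg_suff E_pos_suff power2_eq_square)

lemma cm_32: "cc 32 \<le> cc 33"
  by (simp add: cc_def ccl_def E_le_iff E_less_iff E_000 E_nonneg_suff E_pos_suff power2_eq_square)

lemma cm_33: "cc 33 \<le> cc 34"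
  by (simp add: cc_def ccl_def E_le_iff E_less_iff E_000 E_nonneg_suff E_pos_suff power2_eq_square)

lemma cm_34: "cc 34 \<le> cc 35"
  by (simp add: cc_def ccl_def E_le_iff E_less_iff E_000 E_nonneg_suff E_pos_suff power2_eq_square)

lemma cm_35: "cc 35 \<le> cc 36"
  by (simp add: cc_def ccl_def E_le_iff E_less_iff E_000 E_nonneg_suff E_pos_suff power2_eq_square)

lemma cm_36: "cc 36 \<le> cc 37"
  by (simp add: cc_def ccl_def E_le_iff E_less_iff E_000 E_nonneg_suff E_pos_suff power2_eq_square)

lemma cm_37: "cc 37 \<le> cc 38"
  by (simp add: cc_def ccl_def E_le_iff E_less_iff E_000 E_nonneg_suff E_pos_suff power2_eq_square)

lemma cm_38: "cc 38 \<le> cc 39"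
  by (simp add: cc_def ccl_def E_le_iff E_less_iff E_000 E_nonneg_suff E_pos_suff power2_eq_square)

lemma cm_39: "cc 39 \<le> cc 40"
  by (simp add: cc_def ccl_def E_le_iff E_less_iff E_000 E_nonneg_suff E_pos_suff power2_eq_square)

lemma cm_40: "cc 40 \<le> cc 41"
  by (simp add: cc_def ccl_def E_le_iff E_less_iff E_000 E_nonneg_suff E_pos_suff power2_eq_square)

lemma cm_41: "cc 41 \<le> cc 42"
  by (simp add: cc_def ccl_def E_le_iff E_less_iff E_000 E_nonneg_suff E_pos_suff power2_eq_square)

lemma cm_42: "cc 42 \<le> cc 43"
  by (simp add: cc_def ccl_def E_le_iff E_less_iff E_000 E_nonneg_suff E_pos_suff power2_eq_square)

lemma cm_43: "cc 43 \<le> cc 44"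
  by (simp add: cc_def ccl_def E_le_iff E_less_iff E_000 E_nonneg_suff E_pos_suff power2_eq_square)

lemma cm_44: "cc 44 \<le> cc 45"
  by (simp add: cc_def ccl_def E_le_iff E_less_iff E_000 E_nonneg_suff E_pos_suff power2_eq_square)

lemma cm_45: "cc 45 \<le> cc 46"
  by (simp add: cc_def ccl_def E_le_iff E_less_iff E_000 E_nonneg_suff E_pos_suff power2_eq_square)

lemma cm_46: "cc 46 \<le> cc 47"
  by (simp add: cc_def ccl_def E_le_iff E_less_iff E_000 E_nonneg_suff E_pos_suff power2_eq_square)

lemma cm_47: "cc 47 \<le> cc 48"
  by (simp add: cc_def ccl_def E_le_iff E_less_iff E_000 E_nonneg_suff E_pos_suff power2_eq_square)

lemma cm_48: "cc 48 \<le> cc 49"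
  by (simp add: cc_def ccl_def E_le_iff E_less_iff E_000 E_nonneg_suff E_pos_suff power2_eq_square)

lemma cm_49: "cc 49 \<le> cc 50"
  by (simp add: cc_def ccl_def E_le_iff E_less_iff E_000 E_nonneg_suff E_pos_suff power2_eq_square)

lemma cm_50: "cc 50 \<le> cc 51"
  by (simp add: cc_def ccl_def E_le_iff E_less_iff E_000 E_nonneg_suff E_pos_suff power2_eq_square)

lemma cm_51: "cc 51 \<le> cc 52"
  by (simp add: cc_def ccl_def E_le_iff E_less_iff E_000 E_nonneg_suff E_pos_suff power2_eq_square)

lemma cm_52: "cc 52 \<le> cc 53"
  by (simp add: cc_def ccl_def E_le_iff E_less_iff E_000 E_nonneg_suff E_pos_suff power2_eq_square)

lemma cm_53: "cc 53 \<le> cc 54"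
  by (simp add: cc_def ccl_def E_le_iff E_less_iff E_000 E_nonneg_suff E_pos_suff power2_eq_square)

lemma cm_54: "cc 54 \<le> cc 55"
  by (simp add: cc_def ccl_def E_le_iff E_less_iff E_000 E_nonneg_suff E_pos_suff power2_eq_square)

lemma cm_55: "cc 55 \<le> cc 56"
  by (simp add: cc_def ccl_def E_le_iff E_less_iff E_000 E_nonneg_suff E_pos_suff power2_eq_square)

lemma cm_56: "cc 56 \<le> cc 57"
  by (simp add: cc_def ccl_def E_le_iff E_less_iff E_000 E_nonneg_suff E_pos_suff power2_eq_square)

lemma cm_57: "cc 57 \<le> cc 58"
  by (simp add: cc_def ccl_def E_le_iff E_less_iff E_000 E_nonneg_suff E_pos_suff power2_eq_square)

lemma cm_58: "cc 58 \<le> cc 59"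
  by (simp add: cc_def ccl_def E_le_iff E_less_iff E_000 E_nonneg_suff E_pos_suff power2_eq_square)

lemma cm_59: "cc 59 \<le> cc 60"
  by (simp add: cc_def ccl_def E_le_iff E_less_iff E_000 E_nonneg_suff E_pos_suff power2_eq_square)

lemma cm_60: "cc 60 \<le> cc 61"
  by (simp add: cc_def ccl_def E_le_iff E_less_iff E_000 E_nonneg_suff E_pos_suff power2_eq_square)

lemma cm_1b: "cc (Suc 0) \<le> cc (Suc (Suc 0))"
  using cm_1 by (simp add: numeral_2_eq_2)

lemma cc_step: "cc k \<le> cc (Suc k)"
proof (cases "k < 61")
  case True
  have "\<forall>k\<in>{..<61::nat}. cc k \<le> cc (Suc k)"
    using cm_0 cm_1 cm_2 cm_3 cm_4 cm_5 cm_6 cm_7 cm_8 cm_9 cm_10 cm_11 cm_12 cm_13 cm_14 cm_15 cm_16 cm_17 cm_18 cm_19 cm_20 cm_21 cm_22 cm_23 cm_24 cm_25 cm_26 cm_27 cm_28 cm_29 cm_30 cm_31 cm_32 cm_33 cm_34 cm_35 cm_36 cm_37 cm_38 cm_39 cm_40 cm_41 cm_42 cm_43 cm_44 cm_45 cm_46 cm_47 cm_48 cm_49 cm_50 cm_51 cm_52 cm_53 cm_54 cm_55 cm_56 cm_57 cm_58 cm_59 cm_60 cm_1b by (simp add: lessThan_nat_numeral)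
  thus ?thesis using True by simp
next
  case False thus ?thesis by (simp add: cc_def)
qed

lemma Pc_all: assumes "j \<le> 6" "t < nu j" shows "Pc j t"
proof -
  have "\<forall>j\<in>{..<7::nat}. \<forall>t\<in>{..<nu j}. Pc j t"
    using pc_0_0 pc_0_1 pc_0_2 pc_0_3 pc_1_0 pc_1_1 pc_1_2 pc_1_3 pc_1_4 pc_1_5 pc_1_6 pc_1_7 pc_1_8 pc_1_9 pc_1_10 pc_1_11 pc_1_12 pc_2_0 pc_2_1 pc_2_2 pc_2_3 pc_2_4 pc_2_5 pc_2_6 pc_2_7 pc_2_8 pc_2_9 pc_2_10 pc_2_11 pc_3_0 pc_3_1 pc_3_2 pc_3_3 pc_3_4 pc_3_5 pc_3_6 pc_3_7 pc_4_0 pc_4_1 pc_4_2 pc_4_3 pc_4_4 pc_4_5 pc_4_6 pc_4_7 pc_5_0 pc_5_1 pc_5_2 pc_5_3 pc_5_4 pc_5_5 pc_5_6 pc_5_7 pc_5_8 pc_5_9 pc_5_10 pc_5_11 pc_6_0 pc_6_1 pc_6_2 pc_6_3 by (simp add: lessThan_nat_numeral nu_def)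
  thus ?thesis using assms by auto
qed



section \<open>Rational coordinates\<close>

lemma Nf_of_int: "Nf (of_int a) (of_int b) (of_int c) = (of_int (Nf a b c) :: real)"
  by (simp add: Nf_def)

lemma Nf_rat_zero:
  assumes "a \<in> \<rat>" "b \<in> \<rat>" "c \<in> \<rat>" "Nf a b c = (0::real)"
  shows "a = 0 \<and> b = 0 \<and> c = 0"
proof -
  obtain a1 a2 where a: "a2 > 0" "a = of_int a1 / of_int a2" using assms(1) by (auto elim: Rats_cases')
  obtain b1 b2 where b: "b2 > 0" "b = of_int b1 / of_int b2" using assms(2) by (auto elim: Rats_cases')
  obtain c1 c2 where c: "c2 > 0" "c = of_int c1 / of_int c2" using assms(3) by (auto elim: Rats_cases')
  define d where "d = a2*b2*c2"
  have da: "of_int d * a = of_int (a1*b2*c2)" using a b c by (simp add: d_def field_simps)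
  have db: "of_int d * b = of_int (b1*a2*c2)" using a b c by (simp add: d_def field_simps)
  have dc: "of_int d * c = of_int (c1*a2*b2)" using a b c by (simp add: d_def field_simps)
  have "Nf (of_int d * a) (of_int d * b) (of_int d * c) = of_int d ^ 3 * Nf a b c" by (rule Nf_hom)
  hence "Nf (of_int (a1*b2*c2)) (of_int (b1*a2*c2)) (of_int (c1*a2*b2)) = (0::real)"
    using assms(4) da db dc by simp
  hence "Nf (a1*b2*c2) (b1*a2*c2) (c1*a2*b2) = 0" unfolding Nf_of_int by simp
  from Nf_int_zero[OF this] have "a1*b2*c2 = 0 \<and> b1*a2*c2 = 0 \<and> c1*a2*b2 = 0" .
  thus ?thesis using a b c by auto
qed

lemma E_zero_rat:
  assumes "a \<in> \<rat>" "b \<in> \<rat>" "c \<in> \<rat>" "E a b c = 0"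
  shows "a = 0 \<and> b = 0 \<and> c = 0"
  using E_norm[of a b c] assms Nf_rat_zero[OF assms(1-3)] by simp

lemma E_inj_rat:
  assumes "a \<in> \<rat>" "b \<in> \<rat>" "c \<in> \<rat>" "a' \<in> \<rat>" "b' \<in> \<rat>" "c' \<in> \<rat>" "E a b c = E a' b' c'"
  shows "a = a' \<and> b = b' \<and> c = c'"
proof -
  have "E (a-a') (b-b') (c-c') = 0" using assms(7) E_diff[of a b c a' b' c'] by simp
  from E_zero_rat[OF _ _ _ this] assms(1-6) show ?thesis by auto
qed

lemma E_inverse_rat:
  assumes "a \<in> \<rat>" "b \<in> \<rat>" "c \<in> \<rat>" "E a b c \<noteq> 0"
  shows "\<exists>a' b' c'. a' \<in> \<rat> \<and> b' \<in> \<rat> \<and> c' \<in> \<rat> \<and> inverse (E a b c) = E a' b' c'"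
proof -
  define N where "N = Nf a b c"
  have N0: "N \<noteq> 0" using Nf_rat_zero[OF assms(1-3)] assms(4) by (auto simp: N_def E_000)
  define u where "u = (a-c)*(a-b) - (2*c-b)*(b-c)"
  define v where "v = -(b*(a-b) - (2*c-b)*c)"
  define w where "w = b*(b-c) - (a-c)*c"
  have "E a b c * E (u/N) (v/N) (w/N) = E a b c * ((1/N) * E u v w)"
    by (simp add: E_scale)
  also have "\<dots> = 1" using E_norm[of a b c] N0 by (simp add: u_def v_def w_def N_def)
  finally have "inverse (E a b c) = E (u/N) (v/N) (w/N)" by (rule inverse_unique)
  moreover have "u/N \<in> \<rat>" "v/N \<in> \<rat>" "w/N \<in> \<rat>"
    using assms(1-3) by (auto simp: u_def v_def w_def N_def Nf_def intro!: Rats_divide Rats_mult Rats_diff Rats_add Rats_minus_iff[THEN iffD2] Rats_number_of Rats_1 Rats_0)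
  ultimately show ?thesis by blast
qed

lemma coords_E:
  "coords (E (of_rat r0) (of_rat r1) (of_rat r2)) = (r0, r1, r2)"
  unfolding coords_def
proof (rule the_equality)
  show "case (r0, r1, r2) of (s0, s1, s2) \<Rightarrow> E (of_rat r0) (of_rat r1) (of_rat r2) = of_rat s0 + of_rat s1 * lam + of_rat s2 * lam ^ 2"
    by (simp add: E_def)
next
  fix x assume h: "case x of (s0, s1, s2) \<Rightarrow> E (of_rat r0) (of_rat r1) (of_rat r2) = of_rat s0 + of_rat s1 * lam + of_rat s2 * lam ^ 2"
  obtain s0 s1 s2 where x: "x = (s0, s1, s2)" by (cases x) auto
  have "E (of_rat r0) (of_rat r1) (of_rat r2) = E (of_rat s0) (of_rat s1) (of_rat s2)"
    using h x by (simp add: E_def)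
  hence "of_rat r0 = (of_rat s0::real) \<and> of_rat r1 = (of_rat s1::real) \<and> of_rat r2 = (of_rat s2::real)"
    by (intro E_inj_rat) auto
  thus "x = (r0, r1, r2)" using x by simp
qed

lemma Pi_f_E:
  "Pi_f (E (of_rat r0) (of_rat r1) (of_rat r2)) = E (of_rat (frac r0)) (of_rat (frac r1)) (of_rat (frac r2))"
  unfolding Pi_f_def coords_E by (simp add: E_def)


section \<open>Dynamics\<close>

definition pth :: "(nat \<Rightarrow> nat \<times> nat) \<Rightarrow> bool" where
  "pth \<sigma> \<longleftrightarrow> (\<forall>k. fst (\<sigma> k) \<le> 6 \<and> snd (\<sigma> k) < nu (fst (\<sigma> k)))
          \<and> (\<forall>k. fst (\<sigma> k) = p (fst (\<sigma> (Suc k))) (snd (\<sigma> (Suc k))))"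

definition shk :: "nat \<Rightarrow> (nat \<Rightarrow> nat \<times> nat) \<Rightarrow> nat \<Rightarrow> nat \<times> nat" where
  "shk k \<sigma> = (\<lambda>i. \<sigma> (i + k))"

definition pp :: "nat \<times> nat \<Rightarrow> nat" where "pp s = p (fst s) (snd s)"

lemma shk_0[simp]: "shk 0 \<sigma> = \<sigma>" by (simp add: shk_def)
lemma shk_Suc0: "shk (Suc 0) (shk k \<sigma>) = shk (Suc k) \<sigma>" by (simp add: shk_def)
lemma shk_0app: "shk k \<sigma> 0 = \<sigma> k" by (simp add: shk_def)
lemma shk_Suc: "shk 1 (shk k \<sigma>) = shk (Suc k) \<sigma>" by (simp add: shk_def)
lemma shk_app: "shk k \<sigma> i = \<sigma> (i + k)" by (simp add: shk_def)

lemma V_iff: "\<sigma> \<in> V \<longleftrightarrow> pth \<sigma> \<and> \<not> (\<exists>a\<in>excluded_tails. \<exists>m. \<forall>k\<ge>m. \<sigma> k = a)"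
  unfolding V_def pth_def by simp

lemma V_pth: "\<sigma> \<in> V \<Longrightarrow> pth \<sigma>" unfolding V_iff by blast

lemma pth_D: assumes "pth \<sigma>"
  shows "fst (\<sigma> k) \<le> 6" "snd (\<sigma> k) < nu (fst (\<sigma> k))" "fst (\<sigma> k) = p (fst (\<sigma> (Suc k))) (snd (\<sigma> (Suc k)))"
  using assms unfolding pth_def by blast+

lemma pth_I: assumes "\<And>k. fst (\<sigma> k) \<le> 6" "\<And>k. snd (\<sigma> k) < nu (fst (\<sigma> k))"
   "\<And>k. fst (\<sigma> k) = p (fst (\<sigma> (Suc k))) (snd (\<sigma> (Suc k)))"
  shows "pth \<sigma>"
  using assms unfolding pth_def by blast

lemma pth_shk: assumes "pth \<sigma>" shows "pth (shk k \<sigma>)"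
proof (rule pth_I)
  fix i
  show "fst (shk k \<sigma> i) \<le> 6" unfolding shk_app by (rule pth_D(1)[OF assms])
  show "snd (shk k \<sigma> i) < nu (fst (shk k \<sigma> i))" unfolding shk_app by (rule pth_D(2)[OF assms])
  show "fst (shk k \<sigma> i) = p (fst (shk k \<sigma> (Suc i))) (snd (shk k \<sigma> (Suc i)))"
    unfolding shk_app add_Suc by (rule pth_D(3)[OF assms])
qed

lemma V_shk: assumes "\<sigma> \<in> V" shows "shk k \<sigma> \<in> V"
proof -
  have "pth (shk k \<sigma>)" using assms V_pth pth_shk by blast
  moreover have "\<not> (\<exists>a\<in>excluded_tails. \<exists>m. \<forall>j\<ge>m. shk k \<sigma> j = a)"
  proof
    assume "\<exists>a\<in>excluded_tails. \<exists>m. \<forall>j\<ge>m. shk k \<sigma> j = a"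
    then obtain a m where a: "a \<in> excluded_tails" "\<forall>j\<ge>m. \<sigma> (j + k) = a" by (auto simp: shk_app)
    have "\<forall>j\<ge>m + k. \<sigma> j = a"
    proof (intro allI impI)
      fix j assume "j \<ge> m + k"
      then show "\<sigma> j = a" using a(2)[rule_format, of "j - k"] by simp
    qed
    thus False using assms a(1) unfolding V_iff by blast
  qed
  ultimately show ?thesis unfolding V_iff by blast
qed

lemma pth_Pc: "pth \<sigma> \<Longrightarrow> Pc (fst (\<sigma> k)) (snd (\<sigma> k))"
  by (intro Pc_all pth_D)

lemma pth_link: "pth \<sigma> \<Longrightarrow> pp (\<sigma> (Suc k)) = fst (\<sigma> k)"
  unfolding pp_def by (rule pth_D(3)[symmetric])

lemma omega_pos: "0 < omega"
  unfolding omega_E by (simp add: E_nonneg_suff E_pos_suff power2_eq_square)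
lemma omega_half: "omega < 1/2"
proof -
  have "0 < E (1/2 - 1) 1 1" by (simp add: E_nonneg_suff E_pos_suff power2_eq_square)
  thus ?thesis unfolding omega_E E_def by simp
qed

lemma E0: "E 0 0 0 = 0" and E1: "E 1 0 0 = 1" by (simp_all add: E_def)

lemma digit_bnd: "pth \<sigma> \<Longrightarrow> 0 \<le> digit (\<sigma> k) \<and> digit (\<sigma> k) \<le> 1"
  using pth_Pc[of \<sigma> k] unfolding Pc_def E0 E1 by simp

lemma summ: assumes "pth \<sigma>" shows "summable (\<lambda>i. digit (\<sigma> i) * omega ^ i)"
proof (rule summable_comparison_test'[where g = "\<lambda>i. omega ^ i" and N = 0])
  show "summable (\<lambda>i. omega ^ i)" using omega_pos omega_half by (intro summable_geometric) simp
next
  fix n :: nat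
  have "norm (digit (\<sigma> n) * omega ^ n) = digit (\<sigma> n) * omega ^ n"
    using digit_bnd[OF assms, of n] omega_pos by simp
  also have "\<dots> \<le> 1 * omega ^ n"
    using digit_bnd[OF assms, of n] omega_pos by (intro mult_right_mono) auto
  finally show "norm (digit (\<sigma> n) * omega ^ n) \<le> omega ^ n" by simp
qed

lemma xval_rec: assumes "pth \<sigma>" shows "xval \<sigma> = digit (\<sigma> 0) + omega * xval (shk 1 \<sigma>)"
proof -
  have s1: "summable (\<lambda>i. digit (shk 1 \<sigma> i) * omega ^ i)" using summ pth_shk assms by blast
  have "(\<Sum>i. digit (\<sigma> (Suc i)) * omega ^ (Suc i)) = xval \<sigma> - digit (\<sigma> 0) * omega ^ 0"
    unfolding xval_def by (rule suminf_split_head[OF summ[OF assms]])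
  moreover have "(\<Sum>i. digit (\<sigma> (Suc i)) * omega ^ (Suc i)) = omega * xval (shk 1 \<sigma>)"
  proof -
    have "(\<Sum>i. digit (\<sigma> (Suc i)) * omega ^ (Suc i)) = (\<Sum>i. omega * (digit (shk 1 \<sigma> i) * omega ^ i))"
      by (simp add: shk_app mult.commute mult.left_commute)
    also have "\<dots> = omega * xval (shk 1 \<sigma>)" unfolding xval_def by (rule suminf_mult[OF s1])
    finally show ?thesis .
  qed
  ultimately show ?thesis by simp
qed

lemma xval_bnd: assumes "pth \<sigma>" shows "0 \<le> xval \<sigma> \<and> xval \<sigma> \<le> 2"
proof
  show "0 \<le> xval \<sigma>" unfolding xval_def
    using digit_bnd[OF assms] omega_pos by (intro suminf_nonneg summ assms) auto
next
  have g: "summable (\<lambda>i. omega ^ i)" using omega_pos omega_half by (intro summable_geometric) simp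
  have "xval \<sigma> \<le> (\<Sum>i. omega ^ i)" unfolding xval_def
  proof (rule suminf_le[OF _ summ[OF assms] g])
    fix n show "digit (\<sigma> n) * omega ^ n \<le> omega ^ n"
      using digit_bnd[OF assms, of n] omega_pos mult_right_mono[of "digit (\<sigma> n)" 1 "omega ^ n"] by simp
  qed
  also have "\<dots> = 1 / (1 - omega)" using omega_pos omega_half by (intro suminf_geometric) simp
  also have "\<dots> \<le> 2" using omega_pos omega_half by (simp add: field_simps)
  finally show "xval \<sigma> \<le> 2" .
qed

lemma aa_bnd: "i \<le> 6 \<Longrightarrow> 0 \<le> aa i \<and> aa i \<le> 1 \<and> 0 \<le> aa (Suc i) \<and> aa (Suc i) \<le> 1"
proof -
  have "\<forall>i\<in>{..<7::nat}. E 0 0 0 \<le> aa i \<and> aa i \<le> E 1 0 0 \<and> E 0 0 0 \<le> aa (Suc i) \<and> aa (Suc i) \<le> E 1 0 0"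
    by (simp add: lessThan_nat_numeral aa_def E_le_iff E_less_iff E_nonneg_suff E_pos_suff power2_eq_square)
  thus "i \<le> 6 \<Longrightarrow> ?thesis" unfolding E0 E1 by auto
qed

lemma Pc_unf: assumes "Pc j t"
  shows "p j t \<le> 6" "aa (p j t) \<le> Lp (j,t)" "Rp (j,t) \<le> aa (Suc (p j t))"
    "Rp (j,t) = aa (Suc (p j t)) \<Longrightarrow> (j,t) = topc (p j t)"
    "Lp (j,t) = cc (rk (j,t))" "Rp (j,t) = cc (Suc (rk (j,t)))" "sl ! rk (j,t) = (j,t)"
  using assms unfolding Pc_def by (auto split: if_splits)

lemma pth_P: assumes "pth \<sigma>"
  shows "pp (\<sigma> k) \<le> 6" "aa (pp (\<sigma> k)) \<le> Lp (\<sigma> k)" "Rp (\<sigma> k) \<le> aa (Suc (pp (\<sigma> k)))"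
    "Rp (\<sigma> k) = aa (Suc (pp (\<sigma> k))) \<Longrightarrow> \<sigma> k = topc (pp (\<sigma> k))"
    "Lp (\<sigma> k) = cc (rk (\<sigma> k))" "Rp (\<sigma> k) = cc (Suc (rk (\<sigma> k)))" "sl ! rk (\<sigma> k) = \<sigma> k"
  using Pc_unf[OF pth_Pc[OF assms, of k]] by (simp_all add: pp_def)

lemma closed_n: "pth \<sigma> \<Longrightarrow> aa (pp (\<sigma> 0)) - 3*omega^n \<le> xval \<sigma> \<and> xval \<sigma> \<le> aa (Suc (pp (\<sigma> 0))) + 3*omega^n"
proof (induction n arbitrary: \<sigma>)
  case 0
  then show ?case using xval_bnd[OF 0] aa_bnd[OF pth_P(1)[OF 0, of 0]] by simp
next
  case (Suc n)
  have ps: "pth (shk 1 \<sigma>)" using Suc.prems pth_shk by blast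
  have lk: "pp (shk 1 \<sigma> 0) = fst (\<sigma> 0)" using pth_link[OF Suc.prems, of 0] by (simp add: shk_app)
  from Suc.IH[OF ps] have ih: "aa (fst (\<sigma> 0)) - 3*omega^n \<le> xval (shk 1 \<sigma>)"
     "xval (shk 1 \<sigma>) \<le> aa (Suc (fst (\<sigma> 0))) + 3*omega^n" unfolding lk by auto
  have m1: "omega * (aa (fst (\<sigma> 0)) - 3*omega^n) \<le> omega * xval (shk 1 \<sigma>)"
    using ih(1) omega_pos by (intro mult_left_mono) auto
  have m2: "omega * xval (shk 1 \<sigma>) \<le> omega * (aa (Suc (fst (\<sigma> 0))) + 3*omega^n)"
    using ih(2) omega_pos by (intro mult_left_mono) auto
  have r: "xval \<sigma> = digit (\<sigma> 0) + omega * xval (shk 1 \<sigma>)" by (rule xval_rec[OF Suc.prems])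
  have L: "aa (pp (\<sigma> 0)) \<le> digit (\<sigma> 0) + omega * aa (fst (\<sigma> 0))"
    using pth_P(2)[OF Suc.prems, of 0] by (simp add: Lp_def)
  have R: "digit (\<sigma> 0) + omega * aa (Suc (fst (\<sigma> 0))) \<le> aa (Suc (pp (\<sigma> 0)))"
    using pth_P(3)[OF Suc.prems, of 0] by (simp add: Rp_def)
  have m1': "omega * aa (fst (\<sigma> 0)) - 3*omega^Suc n \<le> omega * xval (shk 1 \<sigma>)"
    using m1 by (simp add: algebra_simps)
  have m2': "omega * xval (shk 1 \<sigma>) \<le> omega * aa (Suc (fst (\<sigma> 0))) + 3*omega^Suc n"
    using m2 by (simp add: algebra_simps)
  show ?case using m1' m2' r L R by linarith
qed

lemma closed: assumes "pth \<sigma>" shows "aa (pp (\<sigma> 0)) \<le> xval \<sigma> \<and> xval \<sigma> \<le> aa (Suc (pp (\<sigma> 0)))"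
proof
  have z0: "(\<lambda>n. omega ^ n) \<longlonglongrightarrow> 0" using omega_pos omega_half by (intro LIMSEQ_power_zero) simp
  have z: "(\<lambda>n. 3 * omega ^ n) \<longlonglongrightarrow> 3 * 0" by (intro tendsto_mult tendsto_const z0)
  have "(\<lambda>n. aa (pp (\<sigma> 0)) - 3*omega^n) \<longlonglongrightarrow> aa (pp (\<sigma> 0)) - 3 * 0"
    by (intro tendsto_diff tendsto_const z)
  hence "aa (pp (\<sigma> 0)) - 3 * 0 \<le> xval \<sigma>"
    by (rule LIMSEQ_le_const2) (use closed_n[OF assms] in auto)
  thus "aa (pp (\<sigma> 0)) \<le> xval \<sigma>" by simp
  have "(\<lambda>n. aa (Suc (pp (\<sigma> 0))) + 3*omega^n) \<longlonglongrightarrow> aa (Suc (pp (\<sigma> 0))) + 3 * 0"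
    by (intro tendsto_add tendsto_const z)
  hence "xval \<sigma> \<le> aa (Suc (pp (\<sigma> 0))) + 3 * 0"
    by (rule LIMSEQ_le_const) (use closed_n[OF assms] in auto)
  thus "xval \<sigma> \<le> aa (Suc (pp (\<sigma> 0)))" by simp
qed


lemma top_facts: "i \<le> 6 \<Longrightarrow> 1 \<le> fst (topc i) \<and> (1 \<le> i \<longrightarrow> fst (topc i) = i \<and> topc i \<in> excluded_tails)"
proof -
  have "\<forall>i\<in>{..<7::nat}. 1 \<le> fst (topc i) \<and> (1 \<le> i \<longrightarrow> fst (topc i) = i \<and> topc i \<in> excluded_tails)"
    by (simp add: lessThan_nat_numeral topc_def excluded_tails_def)
  thus "i \<le> 6 \<Longrightarrow> ?thesis" by auto
qed

lemma top_step:
  assumes "pth \<sigma>" "xval \<sigma> = aa (Suc (pp (\<sigma> 0)))"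
  shows "\<sigma> 0 = topc (pp (\<sigma> 0)) \<and> xval (shk 1 \<sigma>) = aa (Suc (fst (\<sigma> 0)))"
proof -
  have ps: "pth (shk 1 \<sigma>)" using assms pth_shk by blast
  have lk: "pp (shk 1 \<sigma> 0) = fst (\<sigma> 0)" using pth_link[OF assms(1), of 0] by (simp add: shk_app)
  have u: "xval (shk 1 \<sigma>) \<le> aa (Suc (fst (\<sigma> 0)))" using closed[OF ps] lk by simp
  have m: "omega * xval (shk 1 \<sigma>) \<le> omega * aa (Suc (fst (\<sigma> 0)))"
    using u omega_pos by (intro mult_left_mono) auto
  have r: "xval \<sigma> = digit (\<sigma> 0) + omega * xval (shk 1 \<sigma>)" by (rule xval_rec[OF assms(1)])
  have R: "Rp (\<sigma> 0) \<le> aa (Suc (pp (\<sigma> 0)))" by (rule pth_P(3)[OF assms(1)])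
  have Rd: "Rp (\<sigma> 0) = digit (\<sigma> 0) + omega * aa (Suc (fst (\<sigma> 0)))" by (simp add: Rp_def)
  have eq1: "Rp (\<sigma> 0) = aa (Suc (pp (\<sigma> 0)))" using m r R Rd assms(2) by linarith
  have eq2: "omega * xval (shk 1 \<sigma>) = omega * aa (Suc (fst (\<sigma> 0)))" using m r R Rd assms(2) by linarith
  have "xval (shk 1 \<sigma>) = aa (Suc (fst (\<sigma> 0)))" using eq2 omega_pos by simp
  thus ?thesis using pth_P(4)[OF assms(1) eq1] by simp
qed

lemma top_all:
  assumes "pth \<sigma>" "xval \<sigma> = aa (Suc (pp (\<sigma> 0)))"
  shows "xval (shk k \<sigma>) = aa (Suc (pp (\<sigma> k)))"
proof (induction k)
  case 0 then show ?case using assms(2) by simp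
next
  case (Suc k)
  have ps: "pth (shk k \<sigma>)" using assms pth_shk by blast
  have "xval (shk k \<sigma>) = aa (Suc (pp (shk k \<sigma> 0)))" using Suc.IH by (simp add: shk_0app)
  from top_step[OF ps this] have "xval (shk 1 (shk k \<sigma>)) = aa (Suc (fst (shk k \<sigma> 0)))" by blast
  moreover have "fst (\<sigma> k) = pp (\<sigma> (Suc k))" using pth_link[OF assms(1)] by simp
  ultimately show ?case by (simp add: shk_Suc shk_Suc0 shk_0app)
qed

lemma strict:
  assumes "\<sigma> \<in> V" shows "xval \<sigma> < aa (Suc (pp (\<sigma> 0)))"
proof (rule ccontr)
  assume ne: "\<not> xval \<sigma> < aa (Suc (pp (\<sigma> 0)))"
  have ps: "pth \<sigma>" using assms V_pth by blast
  hence eq: "xval \<sigma> = aa (Suc (pp (\<sigma> 0)))" using closed[OF ps] ne by linarith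
  have tk: "\<sigma> k = topc (pp (\<sigma> k))" for k
  proof -
    have ps': "pth (shk k \<sigma>)" using ps pth_shk by blast
    have "xval (shk k \<sigma>) = aa (Suc (pp (shk k \<sigma> 0)))" using top_all[OF ps eq, of k] by (simp add: shk_0app)
    from top_step[OF ps' this] show ?thesis by (simp add: shk_0app)
  qed
  define i where "i = fst (\<sigma> 0)"
  have i1: "1 \<le> i" using top_facts[OF pth_P(1)[OF ps, of 0]] tk[of 0] unfolding i_def by metis
  have i6: "i \<le> 6" using pth_D(1)[OF ps, of 0] by (simp add: i_def)
  have pk: "pp (\<sigma> (Suc k)) = i" for k
  proof (induction k)
    case 0 then show ?case using pth_link[OF ps, of 0] by (simp add: i_def)
  next
    case (Suc k)
    have "pp (\<sigma> (Suc (Suc k))) = fst (\<sigma> (Suc k))" by (rule pth_link[OF ps])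
    also have "\<dots> = fst (topc i)" using tk[of "Suc k"] Suc.IH by simp
    also have "\<dots> = i" using top_facts[OF i6] i1 by simp
    finally show ?case .
  qed
  have "\<forall>k\<ge>1. \<sigma> k = topc i"
  proof (intro allI impI)
    fix k :: nat assume "k \<ge> 1"
    then obtain k' where "k = Suc k'" by (cases k) auto
    thus "\<sigma> k = topc i" using tk[of k] pk[of k'] by simp
  qed
  moreover have "topc i \<in> excluded_tails" using top_facts[OF i6] i1 by simp
  ultimately show False using assms unfolding V_iff by blast
qed

lemma piece:
  assumes "\<sigma> \<in> V" shows "cc (rk (\<sigma> 0)) \<le> xval \<sigma> \<and> xval \<sigma> < cc (Suc (rk (\<sigma> 0)))"
proof -
  have ps: "pth \<sigma>" using assms V_pth by blast
  have vs: "shk 1 \<sigma> \<in> V" using assms V_shk by blast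
  have lk: "pp (shk 1 \<sigma> 0) = fst (\<sigma> 0)" using pth_link[OF ps, of 0] by (simp add: shk_app)
  have l: "aa (fst (\<sigma> 0)) \<le> xval (shk 1 \<sigma>)" using closed[OF V_pth[OF vs]] lk by simp
  have u: "xval (shk 1 \<sigma>) < aa (Suc (fst (\<sigma> 0)))" using strict[OF vs] lk by simp
  have l': "omega * aa (fst (\<sigma> 0)) \<le> omega * xval (shk 1 \<sigma>)" using l omega_pos by (intro mult_left_mono) auto
  have u': "omega * xval (shk 1 \<sigma>) < omega * aa (Suc (fst (\<sigma> 0)))" using u omega_pos by simp
  have r: "xval \<sigma> = digit (\<sigma> 0) + omega * xval (shk 1 \<sigma>)" by (rule xval_rec[OF ps])
  have "Lp (\<sigma> 0) = cc (rk (\<sigma> 0))" "Rp (\<sigma> 0) = cc (Suc (rk (\<sigma> 0)))" using pth_P(5,6)[OF ps] by auto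
  thus ?thesis using l' u' r unfolding Lp_def Rp_def by linarith
qed

lemma cc_mono: "m \<le> n \<Longrightarrow> cc m \<le> cc n"
  by (rule lift_Suc_mono_le[of cc, OF cc_step])

lemma first_eq:
  assumes "\<sigma> \<in> V" "\<tau> \<in> V" "xval \<sigma> = xval \<tau>" shows "\<sigma> 0 = \<tau> 0"
proof -
  have a: "rk (\<sigma> 0) = rk (\<tau> 0)"
  proof (rule ccontr)
    assume ne: "rk (\<sigma> 0) \<noteq> rk (\<tau> 0)"
    show False
    proof (cases "rk (\<sigma> 0) < rk (\<tau> 0)")
      case True
      hence "cc (Suc (rk (\<sigma> 0))) \<le> cc (rk (\<tau> 0))" by (intro cc_mono) simp
      thus False using piece[OF assms(1)] piece[OF assms(2)] assms(3) by linarith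
    next
      case False
      hence "cc (Suc (rk (\<tau> 0))) \<le> cc (rk (\<sigma> 0))" using ne by (intro cc_mono) simp
      thus False using piece[OF assms(1)] piece[OF assms(2)] assms(3) by linarith
    qed
  qed
  have "\<sigma> 0 = sl ! rk (\<sigma> 0)" using pth_P(7)[OF V_pth[OF assms(1)]] by simp
  also have "\<dots> = sl ! rk (\<tau> 0)" using a by simp
  also have "\<dots> = \<tau> 0" using pth_P(7)[OF V_pth[OF assms(2)]] by simp
  finally show ?thesis .
qed

lemma xval_inj:
  assumes "\<sigma> \<in> V" "\<tau> \<in> V" "xval \<sigma> = xval \<tau>" shows "\<sigma> = \<tau>"
proof -
  have "\<sigma> k = \<tau> k \<and> xval (shk k \<sigma>) = xval (shk k \<tau>)" for k
  proof (induction k)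
    case 0 then show ?case using first_eq[OF assms] assms(3) by simp
  next
    case (Suc k)
    have v1: "shk k \<sigma> \<in> V" "shk k \<tau> \<in> V" using assms V_shk by blast+
    have e0: "shk k \<sigma> 0 = shk k \<tau> 0" by (rule first_eq[OF v1]) (use Suc.IH in blast)
    have "digit (shk k \<sigma> 0) + omega * xval (shk 1 (shk k \<sigma>)) = digit (shk k \<tau> 0) + omega * xval (shk 1 (shk k \<tau>))"
      using Suc.IH xval_rec[OF V_pth[OF v1(1)]] xval_rec[OF V_pth[OF v1(2)]] by simp
    hence xe: "xval (shk (Suc k) \<sigma>) = xval (shk (Suc k) \<tau>)" using e0 omega_pos by (simp add: shk_Suc shk_Suc0)
    have "\<sigma> (Suc k) = \<tau> (Suc k)"
      using first_eq[OF V_shk[OF assms(1)] V_shk[OF assms(2)] xe] by (simp add: shk_0app)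
    thus ?case using xe by simp
  qed
  thus ?thesis by auto
qed

lemma code_xval: "\<sigma> \<in> V \<Longrightarrow> code (xval \<sigma>) = \<sigma>"
  unfolding code_def by (rule the_equality) (auto intro: xval_inj)

lemma gamma_xval: assumes "\<sigma> \<in> V" shows "gamma (xval \<sigma>) = xval (shk 1 \<sigma>)"
proof -
  have "gamma (xval \<sigma>) = (xval \<sigma> - digit (\<sigma> 0)) / omega"
    unfolding gamma_def code_xval[OF assms] ..
  also have "\<dots> = xval (shk 1 \<sigma>)" using xval_rec[OF V_pth[OF assms]] omega_pos by simp
  finally show ?thesis .
qed

lemma gamma_pow: assumes "\<sigma> \<in> V" shows "(gamma ^^ k) (xval \<sigma>) = xval (shk k \<sigma>)"
proof (induction k)
  case 0 then show ?case by simp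
next
  case (Suc k)
  have "(gamma ^^ Suc k) (xval \<sigma>) = gamma (xval (shk k \<sigma>))" using Suc.IH by simp
  also have "\<dots> = xval (shk (Suc k) \<sigma>)" using gamma_xval[OF V_shk[OF assms]] by (simp add: shk_Suc shk_Suc0)
  finally show ?case .
qed

lemma xval_range: assumes "\<sigma> \<in> V" shows "0 \<le> xval \<sigma> \<and> xval \<sigma> < 1"
  using closed[OF V_pth[OF assms]] strict[OF assms] aa_bnd[OF pth_P(1)[OF V_pth[OF assms], of 0]] by linarith

lemma periodic_xval:
  assumes "\<sigma> \<in> V" "n \<ge> 1" "\<And>i. \<sigma> (i + n) = \<sigma> i"
  shows "periodic_point (xval \<sigma>)"
proof -
  have "shk n \<sigma> = \<sigma>" using assms(3) by (simp add: shk_def)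
  hence "(gamma ^^ n) (xval \<sigma>) = xval \<sigma>" using gamma_pow[OF assms(1), of n] by simp
  thus ?thesis unfolding periodic_point_def using xval_range[OF assms(1)] assms(2) by auto
qed

lemma xval_per:
  assumes "pth \<sigma>" "\<And>i. \<sigma> (i + n) = \<sigma> i"
  shows "xval \<sigma> * (1 - omega ^ n) = (\<Sum>i<n. digit (\<sigma> i) * omega ^ i)"
proof -
  have a: "xval \<sigma> = (\<Sum>i. digit (\<sigma> (i + n)) * omega ^ (i + n)) + (\<Sum>i<n. digit (\<sigma> i) * omega ^ i)"
    unfolding xval_def by (rule suminf_split_initial_segment[OF summ[OF assms(1)]])
  have b: "(\<lambda>i. digit (\<sigma> (i + n)) * omega ^ (i + n)) = (\<lambda>i. digit (\<sigma> i) * omega ^ i * omega ^ n)"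
  proof
    fix i show "digit (\<sigma> (i + n)) * omega ^ (i + n) = digit (\<sigma> i) * omega ^ i * omega ^ n"
      unfolding assms(2) power_add by (rule mult.assoc[symmetric])
  qed
  have c: "(\<Sum>i. digit (\<sigma> i) * omega ^ i * omega ^ n) = xval \<sigma> * omega ^ n"
    unfolding xval_def by (rule suminf_mult2[OF summ[OF assms(1)], symmetric])
  have "xval \<sigma> = xval \<sigma> * omega ^ n + (\<Sum>i<n. digit (\<sigma> i) * omega ^ i)"
    using a unfolding b c .
  thus ?thesis by (simp add: right_diff_distrib)
qed


definition sa :: "nat \<Rightarrow> nat \<Rightarrow> nat \<times> nat" where
  "sa n i = (if i mod n = 0 then (2,6) else (2,9))"
definition sb :: "nat \<Rightarrow> nat \<Rightarrow> nat \<times> nat" where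
  "sb n i = (if i mod n = 0 then (3,0) else if i mod n = 1 then (0,2) else (0,0))"

lemma p_vals: "p 2 6 = 2" "p 2 9 = 2" "p 3 0 = 0" "p 0 2 = 3" "p 0 0 = 0"
  by (simp_all add: p_def path_list_def)
lemma nu_vals: "nu 2 = 12" "nu 3 = 8" "nu 0 = 4"
  by (simp_all add: nu_def)

lemma not_tail:
  fixes n :: nat
  assumes "n \<ge> 2" "\<And>m. \<sigma> (m * n) \<noteq> \<sigma> (m * n + 1)"
  shows "\<not> (\<exists>a\<in>excluded_tails. \<exists>m. \<forall>k\<ge>m. \<sigma> k = a)"
proof
  assume "\<exists>a\<in>excluded_tails. \<exists>m. \<forall>k\<ge>m. \<sigma> k = a"
  then obtain a m where h: "\<forall>k\<ge>m. \<sigma> k = a" by blast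
  have "m \<le> m * n" using assms(1) by simp
  hence "\<sigma> (m * n) = a" "\<sigma> (m * n + 1) = a" using h[rule_format, of "m * n"] h[rule_format, of "m * n + 1"] by linarith+
  thus False using assms(2)[of m] by simp
qed

lemma mod1: "n \<ge> 2 \<Longrightarrow> Suc (m * n) mod n = Suc 0"
  by (simp add: mod_Suc)

lemma sa_V: assumes "n \<ge> 2" shows "sa n \<in> V"
  unfolding V_iff
proof
  show "pth (sa n)"
    by (rule pth_I) (auto simp: sa_def p_vals nu_vals)
  show "\<not> (\<exists>a\<in>excluded_tails. \<exists>m. \<forall>k\<ge>m. sa n k = a)"
    by (rule not_tail[OF assms]) (simp add: sa_def mod1[OF assms])
qed

lemma sb_V: assumes "n \<ge> 2" shows "sb n \<in> V"
  unfolding V_iff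
proof
  show "pth (sb n)"
  proof (rule pth_I)
    fix k
    show "fst (sb n k) \<le> 6" "snd (sb n k) < nu (fst (sb n k))" by (auto simp: sb_def nu_vals)
    show "fst (sb n k) = p (fst (sb n (Suc k))) (snd (sb n (Suc k)))"
      using assms by (auto simp: sb_def p_vals mod_Suc)
  qed
  show "\<not> (\<exists>a\<in>excluded_tails. \<exists>m. \<forall>k\<ge>m. sb n k = a)"
    by (rule not_tail[OF assms]) (simp add: sb_def mod1[OF assms])
qed

lemma sa_per: "n \<ge> 1 \<Longrightarrow> sa n (i + n) = sa n i" by (simp add: sa_def)
lemma sb_per: "n \<ge> 1 \<Longrightarrow> sb n (i + n) = sb n i" by (simp add: sb_def)

lemma dig_vals: "digit (2,6) = E (-2) 3 2" "digit (2,9) = E (-2) 4 0" "digit (0,2) = E 0 0 1"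
  "digit (3,0) = 0" "digit (0,0) = 0"
  by (simp_all add: d_2_6 d_2_9 d_0_2 d_3_0 d_0_0 E0)

lemma lam5: "E 0 0 1 * omega = E 0 (-1) 2"
  by (simp add: mult.commute[of _ omega] omega_mult)

lemma sum_sb: assumes "n \<ge> 2"
  shows "(\<Sum>i<n. digit (sb n i) * omega ^ i) = E 0 (-1) 2"
proof -
  have "(\<Sum>i<n. digit (sb n i) * omega ^ i) = (\<Sum>i<n. if i = 1 then E 0 0 1 * omega ^ i else 0)"
    by (rule sum.cong) (auto simp: sb_def dig_vals)
  also have "\<dots> = E 0 0 1 * omega" using assms by (simp add: sum.delta)
  finally show ?thesis using lam5 by simp
qed

lemma sum_sa: assumes "n \<ge> 2"
  shows "(\<Sum>i<n. digit (sa n i) * omega ^ i) = E (-2) 4 0 * (\<Sum>i<n. omega ^ i) + E 0 (-1) 2"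
proof -
  have "(\<Sum>i<n. digit (sa n i) * omega ^ i) = (\<Sum>i<n. E (-2) 4 0 * omega ^ i + (if i = 0 then E 0 (-1) 2 * omega ^ i else 0))"
  proof (rule sum.cong)
    fix i assume "i \<in> {..<n}"
    hence "i mod n = i" by simp
    moreover have "E (-2) 3 2 = E (-2) 4 0 + E 0 (-1) 2" by (simp add: E_add)
    ultimately show "digit (sa n i) * omega ^ i = E (-2) 4 0 * omega ^ i + (if i = 0 then E 0 (-1) 2 * omega ^ i else 0)"
      by (auto simp: sa_def dig_vals algebra_simps)
  qed simp
  also have "\<dots> = E (-2) 4 0 * (\<Sum>i<n. omega ^ i) + E 0 (-1) 2"
    using assms by (simp add: sum.distrib sum_distrib_left sum.delta)
  finally show ?thesis .
qed

lemma omega_pow_lt: assumes "n \<ge> 1" shows "omega ^ n < 1"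
proof -
  have "omega ^ n \<le> omega ^ 1" using omega_pos omega_half assms by (intro power_decreasing) auto
  thus ?thesis using omega_half by simp
qed

lemma diff_ab: assumes "n \<ge> 2"
  shows "xval (sa n) = xval (sb n) + E 1 (-2) 1"
proof -
  have n1: "1 - omega ^ n \<noteq> 0" using omega_pow_lt[of n] assms by simp
  have A: "xval (sa n) * (1 - omega ^ n) = E (-2) 4 0 * (\<Sum>i<n. omega ^ i) + E 0 (-1) 2"
    using xval_per[OF V_pth[OF sa_V[OF assms]], of n] sa_per[of n] sum_sa[OF assms] assms by simp
  have B: "xval (sb n) * (1 - omega ^ n) = E 0 (-1) 2"
    using xval_per[OF V_pth[OF sb_V[OF assms]], of n] sb_per[of n] sum_sb[OF assms] assms by simp
  have a2: "E (-2) 4 0 = E 1 (-2) 1 * (1 - omega)"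
  proof -
    have "1 - omega = E 0 1 1" unfolding omega_E E_def by simp
    thus ?thesis by (simp add: E_mult)
  qed
  have "E (-2) 4 0 * (\<Sum>i<n. omega ^ i) = E 1 (-2) 1 * (1 - omega ^ n)"
    unfolding a2 one_diff_power_eq[of omega n] by (simp add: mult.assoc)
  hence "(xval (sa n) - xval (sb n) - E 1 (-2) 1) * (1 - omega ^ n) = 0"
    using A B by (simp add: algebra_simps)
  thus ?thesis using n1 by simp
qed


section \<open>Integer elements\<close>

definition EI :: "int \<times> int \<times> int \<Rightarrow> real" where
  "EI v = E (of_int (fst v)) (of_int (fst (snd v))) (of_int (snd (snd v)))"

fun mulw :: "int \<times> int \<times> int \<Rightarrow> int \<times> int \<times> int \<Rightarrow> int \<times> int \<times> int" where
  "mulw (a,b,c) (d,e,f) = (a*d + b*f + c*e - c*f, a*e + b*d - b*f - c*e + 2*c*f, a*f + b*e + c*d - b*f - c*e)"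

lemma EI_mult: "EI u * EI v = EI (mulw u v)"
  by (cases u; cases v) (simp add: EI_def E_mult)

lemma EI_one: "EI (1,0,0) = 1" by (simp add: EI_def E_def)

lemma EI_add1: "EI (a,b,c) + 1 = EI (a+1,b,c)" by (simp add: EI_def E_def)

lemma EI_scale: "of_int q * EI (a,b,c) = EI (q*a, q*b, q*c)" by (simp add: EI_def E_scale)

primrec wpow :: "nat \<Rightarrow> int \<times> int \<times> int" where
  "wpow 0 = (1,0,0)" | "wpow (Suc k) = mulw (wpow k) (1,-1,-1)"

lemma omega_pow_EI: "omega ^ k = EI (wpow k)"
proof (induction k)
  case 0 then show ?case by (simp add: EI_one)
next
  case (Suc k)
  have "omega = EI (1,-1,-1)" by (simp add: EI_def omega_E)
  hence "omega ^ Suc k = EI (wpow k) * EI (1,-1,-1)" using Suc.IH by (simp add: power_Suc2)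
  thus ?case by (simp add: EI_mult)
qed

lemma EI_pow: "\<exists>v. EI u ^ k = EI v"
proof (induction k)
  case 0 then show ?case using EI_one by (metis power_0)
next
  case (Suc k)
  then obtain v where "EI u ^ k = EI v" by blast
  hence "EI u ^ Suc k = EI (mulw u v)" by (simp add: EI_mult)
  thus ?case by blast
qed

lemma winv: "EI (4,3,2) * omega = 1"
  by (simp add: EI_def omega_E E_mult E1)

lemma pigeon:
  fixes q :: int assumes q: "q > 0"
  shows "\<exists>n\<ge>2. \<exists>z. omega ^ n - 1 = of_int q * EI z"
proof -
  define f where "f k = (fst (wpow k) mod q, fst (snd (wpow k)) mod q, snd (snd (wpow k)) mod q)" for k
  have "range f \<subseteq> {0..<q} \<times> {0..<q} \<times> {0..<q}" using q by (auto simp: f_def)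
  hence fin: "finite (range f)" by (rule finite_subset) simp
  have "\<not> inj f"
  proof
    assume "inj f"
    hence "finite (UNIV :: nat set)" using fin finite_imageD by blast
    thus False by simp
  qed
  then obtain i j where ij: "f i = f j" "i \<noteq> j" unfolding inj_def by blast
  have "\<exists>i j. i < j \<and> f i = f j"
  proof (cases "i < j")
    case True thus ?thesis using ij by blast
  next
    case False thus ?thesis using ij by (intro exI[of _ j] exI[of _ i]) auto
  qed
  then obtain i j where ij: "i < j" "f i = f j" by blast
  obtain a b c where wi: "wpow i = (a,b,c)" by (cases "wpow i") auto
  obtain a' b' c' where wj: "wpow j = (a',b',c')" by (cases "wpow j") auto
  have "a' mod q = a mod q" "b' mod q = b mod q" "c' mod q = c mod q" using ij(2) wi wj by (auto simp: f_def)
  hence "q dvd a' - a" "q dvd b' - b" "q dvd c' - c" by (simp_all add: mod_eq_dvd_iff)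
  then obtain u0 u1 u2 where u: "a' - a = q * u0" "b' - b = q * u1" "c' - c = q * u2" by (auto elim!: dvdE)
  have d: "omega ^ j - omega ^ i = of_int q * EI (u0,u1,u2)"
  proof -
    have "omega ^ j - omega ^ i = EI (a',b',c') - EI (a,b,c)" using wi wj omega_pow_EI by simp
    also have "\<dots> = EI (a' - a, b' - b, c' - c)" by (simp add: EI_def E_diff)
    also have "\<dots> = of_int q * EI (u0,u1,u2)" using u EI_scale by simp
    finally show ?thesis .
  qed
  define m where "m = j - i"
  have m1: "m \<ge> 1" using ij by (simp add: m_def)
  obtain v where v: "EI (4,3,2) ^ i = EI v" using EI_pow by blast
  have inv: "EI v * omega ^ i = 1" using winv v by (metis power_mult_distrib power_one)
  have "omega ^ m - 1 = (EI v * omega ^ i) * (omega ^ m - 1)" using inv by simp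
  also have "\<dots> = EI v * (omega ^ j - omega ^ i)"
    using ij(1) by (simp add: m_def algebra_simps power_add[symmetric])
  also have "\<dots> = of_int q * EI (mulw v (u0,u1,u2))" using d by (simp add: EI_mult[symmetric] algebra_simps)
  finally have e: "omega ^ m - 1 = of_int q * EI (mulw v (u0,u1,u2))" .
  obtain y0 y1 y2 where y: "mulw v (u0,u1,u2) = (y0,y1,y2)" by (cases "mulw v (u0,u1,u2)") auto
  obtain p0 p1 p2 where pw: "wpow m = (p0,p1,p2)" by (cases "wpow m") auto
  have "omega ^ (2*m) - 1 = (omega ^ m - 1) * (omega ^ m + 1)"
    by (simp add: power_mult algebra_simps power2_eq_square)
  also have "\<dots> = of_int q * (EI (y0,y1,y2) * EI (p0+1,p1,p2))"
    using e y pw omega_pow_EI[of m] EI_add1 by simp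
  also have "\<dots> = of_int q * EI (mulw (y0,y1,y2) (p0+1,p1,p2))" by (simp add: EI_mult)
  finally show ?thesis using m1 by (intro exI[of _ "2*m"]) auto
qed


lemma xb_eq: assumes "n \<ge> 2" shows "xval (sb n) * (1 - omega ^ n) = E 0 (-1) 2"
  using xval_per[OF V_pth[OF sb_V[OF assms]], of n] sb_per[of n] sum_sb[OF assms] assms by simp

lemma xb_rat: assumes "n \<ge> 2"
  shows "\<exists>r0 r1 r2. xval (sb n) = E (of_rat r0) (of_rat r1) (of_rat r2)"
proof -
  obtain w0 w1 w2 where w: "wpow n = (w0,w1,w2)" by (cases "wpow n") auto
  have om: "1 - omega ^ n = E (1 - of_int w0) (- of_int w1) (- of_int w2)"
    using omega_pow_EI[of n] w by (simp add: EI_def E_def)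
  have nz: "1 - omega ^ n \<noteq> 0" using omega_pow_lt[of n] assms by simp
  obtain a b c where abc: "a \<in> \<rat>" "b \<in> \<rat>" "c \<in> \<rat>" "inverse (1 - omega ^ n) = E a b c"
    using E_inverse_rat[of "1 - of_int w0" "- of_int w1" "- of_int w2"] nz unfolding om by auto
  have "xval (sb n) = E 0 (-1) 2 * inverse (1 - omega ^ n)"
    using xb_eq[OF assms] nz by (simp add: field_simps)
  also have "\<dots> = E (0*a + (-1)*c + 2*b - 2*c) (0*b + (-1)*a - (-1)*c - 2*b + 2*2*c) (0*c + (-1)*b + 2*a - (-1)*c - 2*b)"
    unfolding abc(4) E_mult ..
  finally have x: "xval (sb n) = E (0*a + (-1)*c + 2*b - 2*c) (0*b + (-1)*a - (-1)*c - 2*b + 2*2*c) (0*c + (-1)*b + 2*a - (-1)*c - 2*b)" .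
  have "0*a + (-1)*c + 2*b - 2*c \<in> \<rat>" "0*b + (-1)*a - (-1)*c - 2*b + 2*2*c \<in> \<rat>" "0*c + (-1)*b + 2*a - (-1)*c - 2*b \<in> \<rat>"
    using abc(1-3) by (auto intro!: Rats_add Rats_diff Rats_mult)
  then obtain r0 r1 r2 where "0*a + (-1)*c + 2*b - 2*c = of_rat r0" "0*b + (-1)*a - (-1)*c - 2*b + 2*2*c = of_rat r1"
    "0*c + (-1)*b + 2*a - (-1)*c - 2*b = of_rat r2" by (auto elim!: Rats_cases)
  thus ?thesis using x by auto
qed

lemma bdry: assumes "n \<ge> 2"
  shows "\<exists>r0 r1 r2. xval (sb n) = E (of_rat r0) (of_rat r1) (of_rat r2) \<and> Pi_f (xval (sb n)) \<in> boundary_Xi"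
proof -
  obtain r0 r1 r2 where xb: "xval (sb n) = E (of_rat r0) (of_rat r1) (of_rat r2)" using xb_rat[OF assms] by blast
  have xa: "xval (sa n) = E (of_rat (r0 + of_int 1)) (of_rat (r1 + of_int (-2))) (of_rat (r2 + of_int 1))"
  proof -
    have "E (of_rat (r0 + of_int 1)) (of_rat (r1 + of_int (-2))) (of_rat (r2 + of_int 1)) = E (of_rat r0) (of_rat r1) (of_rat r2) + E 1 (-2) 1"
      unfolding E_def of_rat_add of_rat_of_int_eq by (simp add: algebra_simps)
    thus ?thesis using diff_ab[OF assms] xb by simp
  qed
  have Pa: "Pi_f (xval (sa n)) = Pi_f (xval (sb n))"
    unfolding xa xb Pi_f_E by (simp only: frac_add_of_int_right)
  have qa: "in_Qlam (xval (sa n))" unfolding in_Qlam_def xa E_def by blast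
  have qb: "in_Qlam (xval (sb n))" unfolding in_Qlam_def xb E_def by blast
  have pa: "periodic_point (xval (sa n))" using sa_V[OF assms] assms by (intro periodic_xval[of _ n]) (auto simp: sa_per)
  have pb: "periodic_point (xval (sb n))" using sb_V[OF assms] assms by (intro periodic_xval[of _ n]) (auto simp: sb_per)
  have ne: "xval (sa n) \<noteq> xval (sb n)"
  proof -
    have "0 < E 1 (-2) 1" by (simp add: E_nonneg_suff E_pos_suff power2_eq_square)
    thus ?thesis using diff_ab[OF assms] by simp
  qed
  define \<xi> where "\<xi> = Pi_f (xval (sb n))"
  have xi: "\<xi> = E (of_rat (frac r0)) (of_rat (frac r1)) (of_rat (frac r2))" unfolding \<xi>_def xb Pi_f_E ..
  have "\<exists>a0 a1 a2. \<xi> = of_rat a0 + of_rat a1 * lam + of_rat a2 * lam ^ 2 \<and> 0 \<le> a0 \<and> a0 < 1 \<and> 0 \<le> a1 \<and> a1 < 1 \<and> 0 \<le> a2 \<and> a2 < 1"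
    by (intro exI[of _ "frac r0"] exI[of _ "frac r1"] exI[of _ "frac r2"]) (simp add: xi E_def frac_lt_1)
  hence "\<xi> \<in> Xi" unfolding Xi_def by blast
  moreover have "kappa \<xi> > 1"
  proof -
    define S where "S = {x. periodic_point x \<and> in_Qlam x \<and> Pi_f x = \<xi>}"
    have sub: "{xval (sa n), xval (sb n)} \<subseteq> S" using Pa qa qb pa pb by (auto simp: S_def \<xi>_def)
    show ?thesis
    proof (cases "finite S")
      case True
      have "2 = card {xval (sa n), xval (sb n)}" using ne by simp
      also have "\<dots> \<le> card S" by (rule card_mono[OF True sub])
      finally show ?thesis using True unfolding kappa_def S_def[symmetric] Let_def
        by (simp add: one_enat_def)
    next
      case False
      thus ?thesis unfolding kappa_def S_def[symmetric] Let_def by simp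
    qed
  qed
  ultimately have "\<xi> \<in> boundary_Xi" unfolding boundary_Xi_def by simp
  thus ?thesis using xb unfolding \<xi>_def by blast
qed

lemma common_denom:
  fixes R :: "rat set" assumes "finite R"
  shows "\<exists>D::int. D > 0 \<and> (\<forall>r\<in>R. \<exists>k::int. of_int D * r = of_int k)"
  using assms
proof (induction R rule: finite_induct)
  case empty then show ?case by (intro exI[of _ 1]) simp
next
  case (insert r R)
  then obtain D where D: "D > 0" "\<forall>r\<in>R. \<exists>k::int. of_int D * r = of_int k" by blast
  obtain a b where ab: "quotient_of r = (a, b)" by (cases "quotient_of r") auto
  have b: "b > 0" using quotient_of_denom_pos[OF ab] .
  have r: "r = of_int a / of_int b" using quotient_of_div[OF ab] .
  have br: "of_int b * r = of_int a"
  proof -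
    have "(of_int b :: rat) \<noteq> 0" using b by simp
    thus ?thesis unfolding r by simp
  qed
  have "of_int (D * b) * r = of_int (D * a)"
  proof -
    have "of_int (D * b) * r = of_int D * (of_int b * r)" by (simp add: mult.assoc)
    also have "\<dots> = of_int (D * a)" unfolding br by simp
    finally show ?thesis .
  qed
  moreover have "\<exists>k::int. of_int (D * b) * r' = of_int k" if "r' \<in> R" for r'
  proof -
    from bspec[OF D(2) that] obtain k :: int where kk: "of_int D * r' = of_int k" ..
    have "of_int (D * b) * r' = of_int b * (of_int D * r')" by (simp only: of_int_mult mult_ac)
    also have "\<dots> = of_int (b * k)" unfolding kk by simp
    finally have "of_int (D * b) * r' = of_int (b * k)" .
    thus ?thesis by blast
  qed
  ultimately have A: "of_int (D * b) * r = of_int (D * a)" and B: "\<And>r'. r' \<in> R \<Longrightarrow> \<exists>k::int. of_int (D * b) * r' = of_int k"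
    by blast+
  have all: "\<forall>r'\<in>insert r R. \<exists>k::int. of_int (D*b) * r' = of_int k"
  proof
    fix r' assume "r' \<in> insert r R"
    thus "\<exists>k::int. of_int (D*b) * r' = of_int k"
    proof
      assume "r' = r" thus ?thesis using A by blast
    next
      assume "r' \<in> R" thus ?thesis using B by blast
    qed
  qed
  have pos: "D*b > 0" using D(1) b by simp
  show ?case using pos all by blast
qed

theorem proposition1:
  shows "infinite boundary_Xi"
proof
  assume fin: "finite boundary_Xi"
  define R where "R = (\<Union>\<xi>\<in>boundary_Xi. {fst (coords \<xi>), fst (snd (coords \<xi>)), snd (snd (coords \<xi>))})"
  have "finite R" unfolding R_def using fin by auto
  then obtain D :: int where D: "D > 0" "\<forall>r\<in>R. \<exists>k::int. of_int D * r = of_int k"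
    using common_denom by blast
  define q where "q = D + 1"
  have q0: "q > 0" using D by (simp add: q_def)
  obtain n z where n: "n \<ge> 2" and z: "omega ^ n - 1 = of_int q * EI z" using pigeon[OF q0] by blast
  obtain r0 r1 r2 where xb: "xval (sb n) = E (of_rat r0) (of_rat r1) (of_rat r2)"
    and bd: "Pi_f (xval (sb n)) \<in> boundary_Xi" using bdry[OF n] by blast
  have co: "coords (Pi_f (xval (sb n))) = (frac r0, frac r1, frac r2)"
    unfolding xb Pi_f_E coords_E ..
  have f0: "frac r0 \<in> R" and f1: "frac r1 \<in> R" and f2: "frac r2 \<in> R" using bd co unfolding R_def by force+
  from bspec[OF D(2) f0] obtain k0 :: int where k0: "of_int D * frac r0 = of_int k0" ..
  from bspec[OF D(2) f1] obtain k1 :: int where k1: "of_int D * frac r1 = of_int k1" ..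
  from bspec[OF D(2) f2] obtain k2 :: int where k2: "of_int D * frac r2 = of_int k2" ..
  note k = k0 k1 k2
  have fr: "x = of_int \<lfloor>x\<rfloor> + frac x" for x :: rat by (simp add: frac_def)
  have K: "of_int D * r = of_int (D * \<lfloor>r\<rfloor> + k)" if "of_int D * frac r = of_int k" for r :: rat and k :: int
    using that unfolding frac_def by (simp add: algebra_simps)
  define K0 where "K0 = D * \<lfloor>r0\<rfloor> + k0"
  define K1 where "K1 = D * \<lfloor>r1\<rfloor> + k1"
  define K2 where "K2 = D * \<lfloor>r2\<rfloor> + k2"
  have "of_int D * xval (sb n) = E (of_rat (of_int D * r0)) (of_rat (of_int D * r1)) (of_rat (of_int D * r2))"
    unfolding xb E_scale by (simp add: of_rat_mult)
  also have "\<dots> = EI (K0, K1, K2)"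
    unfolding K[OF k(1)] K[OF k(2)] K[OF k(3)] K0_def K1_def K2_def EI_def by (simp add: of_rat_add of_rat_mult of_rat_of_int_eq)
  finally have DX: "of_int D * xval (sb n) = EI (K0, K1, K2)" .
  obtain m0 m1 m2 where mm: "mulw (K0,K1,K2) z = (m0,m1,m2)" by (cases "mulw (K0,K1,K2) z") auto
  have "of_int D * E 0 (-1) 2 = of_int D * xval (sb n) * (1 - omega ^ n)"
    using xb_eq[OF n] by simp
  also have "\<dots> = - (of_int q * (EI (K0,K1,K2) * EI z))"
    unfolding DX using z by (simp add: algebra_simps)
  also have "\<dots> = EI (- q * m0, - q * m1, - q * m2)"
    unfolding EI_mult mm using EI_scale[of "-q" m0 m1 m2] by simp
  finally have "E 0 (- of_int D) (of_int D * 2) = E (- (of_int q * of_int m0)) (- (of_int q * of_int m1)) (- (of_int q * of_int m2))"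
    unfolding E_scale EI_def by simp
  moreover have QQ: "(0::real) \<in> \<rat>" "- (of_int D::real) \<in> \<rat>" "(of_int D * 2 :: real) \<in> \<rat>"
    "- (of_int q * of_int m0 :: real) \<in> \<rat>" "- (of_int q * of_int m1 :: real) \<in> \<rat>" "- (of_int q * of_int m2 :: real) \<in> \<rat>"
    by (simp_all add: Rats_mult)
  ultimately have "- (of_int D :: real) = - (of_int q * of_int m1)"
    using E_inj_rat[OF QQ] by blast
  hence "(of_int D :: real) = of_int (q * m1)" by simp
  hence Dq: "D = q * m1" by (simp only: of_int_eq_iff)
  show False
  proof (cases "m1 \<le> 0")
    case True
    have "q * m1 \<le> 0" using q0 True by (intro mult_nonneg_nonpos) auto
    thus False using Dq D(1) by linarith
  next
    case False
    hence "q * 1 \<le> q * m1" using q0 by (intro mult_left_mono) auto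
    thus False using Dq q_def by linarith
  qed
qed


end
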